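(* For a weakly coupled POMDP and horizon $T$, let $(\tau^m,\delta^m)_{m\in[M]}$ be an optimal solution of MILP (LB). Then the policy $\delta$ defined by $\delta^t_{\mathbf a|\mathbf o}=\prod_{m=1}^M\delta^{t,m}_{a^m|o^m}$ is an optimal deterministic decomposable policy for the weakly coupled POMDP problem with memoryless policies. Furthermore, MILP (IP) is a relaxation of MILP (LB) (every feasible solution of (LB) yields a feasible solution of (IP) with the same objective value). In particular $z_{\mathrm{LB}}\le v^*_{\mathrm{ml}}$ and $z_{\mathrm{LB}}\le z_{\mathrm{IP}}$.
   Context: Weakly coupled POMDP: components $m\in[M]$, each a POMDP $(\mathcal X_S^m,\mathcal X_O^m,\mathcal X_A^m,\mathfrak p^m,\mathbf r^m)$ with initial distribution $p^m(s)$, emissions $p^m(o|s)$, transitions $p^m(s'|s,a)$, reward $r^m(s,a,s')$; $\mathbf D^m:\mathcal X_A^m\to\mathbb R^q$, $\mathbf b\in\mathbb R^q_{\ge0}$. Full system: $\mathcal X_S=\prod_m\mathcal X_S^m$, $\mathcal X_O=\prod_m\mathcal X_O^m$, $\mathcal X_A=\{\mathbf a\in\prod_m\mathcal X_A^m:\sum_m\mathbf D^m(a^m)\le\mathbf b\}$ (nonempty), product initial/emission/transition probabilities and additive reward $r=\sum_m r^m$. A memoryless policy $\delta^t_{\mathbf a|\mathbf o}$ ($\mathbf a\in\mathcal X_A$) is a conditional distribution on $\mathcal X_A$ for each $\mathbf o,t$; $v^*_{\mathrm{ml}}$ is the maximum over these of $\mathbb E_\delta[\sum_{t=1}^T r(\mathbf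 S_t,\mathbf A_t,\mathbf S_{t+1})]$. A policy is decomposable if $\delta^t_{\mathbf a|\mathbf o}=\prod_m\delta^{t,m}_{a^m|o^m}$ for memoryless policies $\delta^m$ on component $m$, and deterministic if it takes values in $\{0,1\}$. For a POMDP, $\mathcal Q^{\mathrm d}(T,\mathcal X_S,\mathcal X_O,\mathcal X_A,\mathfrak p)$ is the set of $(\tau,\delta)$ with $\delta^t_{a|o}\in\{0,1\}$, $\sum_a\delta^t_{a|o}=1$, nonnegative $\tau$ satisfying (i) $\tau^1_s=p(s)$; (ii) $\sum_{o,a}\tau^t_{soa}=\nu^t_s$, $\nu^1_s=\tau^1_s$, $\nu^t_s=\sum_{s'',a''}\tau^{t-1}_{s''a''s}$; (iii) $\sum_{\bar s}\tau^t_{sa\bar s}=\sum_o\tau^t_{soa}$; (iv) $\tau^t_{sas'}=p(s'|s,a)\sum_{\bar s}\tau^t_{sa\bar s}$; (McCormick) $\tau^t_{soa}\le p(o|s)\nu^t_s$, $\tau^t_{soa}\le\delta^t_{a|o}$, $\tau^t_{soa}\ge p(o|s)\nu^t_s+\delta^t_{a|o}-1$. MILP (IP): maximize $\sum_t\sum_m\sum_{s,a,s'}r^m(s,a,s')\tau^{t,m}_{sas'}$ s.t. $(\tau^m,\delta^m)\in\mathcal Q^{\mathrm d}(T,\mathcal X_S^m,\mathcal X_O^m,\mathcal X_A^m,\mathfrak p^m)$ for all $m$, $\tau^{t,m}_a=\sum_{s,o}\tau^{t,m}_{soa}$, $\sum_m\sum_a\mathbf D^m(a)\tau^{t,m}_a\le\mathbf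 b$ for all $t$; value $z_{\mathrm{IP}}$. MILP (LB): same objective, s.t. $(\tau^m,\delta^m)\in\mathcal Q^{\mathrm d}(T,\mathcal X_S^m,\mathcal X_O^m,\mathcal X_A^m,\mathfrak p^m)$ for all $m$ and $\sum_m\sum_{a\in\mathcal X_A^m}\mathbf D^m(a)\delta^{t,m}_{a|o^m}\le\mathbf b$ for all $\mathbf o\in\mathcal X_O$, $t\in[T]$; value $z_{\mathrm{LB}}$. *)

theory Defs
  imports Complex_Main "HOL-Library.FuncSet"
begin

text \<open>A weakly coupled POMDP. Components are indexed by m < M (i.e. m = 0..M-1);
 time steps are t = 1..T. The linking constraint lives in R^q, modelled as 'q => real
 with 'q a finite index type.\<close>

record ('s, 'o, 'a, 'q) wcpomdp =
  ncomp :: nat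
  St  :: "nat \<Rightarrow> 's set"
  Ob  :: "nat \<Rightarrow> 'o set"
  Ac  :: "nat \<Rightarrow> 'a set"
  pinit :: "nat \<Rightarrow> 's \<Rightarrow> real"
  pemit :: "nat \<Rightarrow> 's \<Rightarrow> 'o \<Rightarrow> real"
  ptrans :: "nat \<Rightarrow> 's \<Rightarrow> 'a \<Rightarrow> 's \<Rightarrow> real"
  rew :: "nat \<Rightarrow> 's \<Rightarrow> 'a \<Rightarrow> 's \<Rightarrow> real"
  Dm :: "nat \<Rightarrow> 'a \<Rightarrow> 'q \<Rightarrow> real"
  bvec :: "'q \<Rightarrow> real"

definition XS :: "('s,'o,'a,'q) wcpomdp \<Rightarrow> (nat \<Rightarrow> 's) set" where
  "XS W = PiE {..<ncomp W} (St W)"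

definition XO :: "('s,'o,'a,'q) wcpomdp \<Rightarrow> (nat \<Rightarrow> 'o) set" where
  "XO W = PiE {..<ncomp W} (Ob W)"

definition XA :: "('s,'o,'a,'q::finite) wcpomdp \<Rightarrow> (nat \<Rightarrow> 'a) set" where
  "XA W = {a \<in> PiE {..<ncomp W} (Ac W).
             \<forall>j. (\<Sum>m<ncomp W. Dm W m (a m) j) \<le> bvec W j}"

definition P0 :: "('s,'o,'a,'q) wcpomdp \<Rightarrow> (nat \<Rightarrow> 's) \<Rightarrow> real" where
  "P0 W s = (\<Prod>m<ncomp W. pinit W m (s m))"

definition PE :: "('s,'o,'a,'q) wcpomdp \<Rightarrow> (nat \<Rightarrow> 's) \<Rightarrow> (nat \<Rightarrow> 'o) \<Rightarrow> real" where
  "PE W s ob = (\<Prod>m<ncomp W. pemit W m (s m) (ob m))"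

definition PT :: "('s,'o,'a,'q) wcpomdp \<Rightarrow> (nat \<Rightarrow> 's) \<Rightarrow> (nat \<Rightarrow> 'a) \<Rightarrow> (nat \<Rightarrow> 's) \<Rightarrow> real" where
  "PT W s a s' = (\<Prod>m<ncomp W. ptrans W m (s m) (a m) (s' m))"

definition RW :: "('s,'o,'a,'q) wcpomdp \<Rightarrow> (nat \<Rightarrow> 's) \<Rightarrow> (nat \<Rightarrow> 'a) \<Rightarrow> (nat \<Rightarrow> 's) \<Rightarrow> real" where
  "RW W s a s' = (\<Sum>m<ncomp W. rew W m (s m) (a m) (s' m))"

definition wc_valid :: "('s,'o,'a,'q::finite) wcpomdp \<Rightarrow> bool" where
  "wc_valid W \<longleftrightarrow>
     (\<forall>m<ncomp W.
        finite (St W m) \<and> St W m \<noteq> {} \<and> finite (Ob W m) \<and> Ob W m \<noteq> {} \<and>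
        finite (Ac W m) \<and> Ac W m \<noteq> {} \<and>
        (\<forall>s\<in>St W m. pinit W m s \<ge> 0) \<and> (\<Sum>s\<in>St W m. pinit W m s) = 1 \<and>
        (\<forall>s\<in>St W m. (\<forall>ob\<in>Ob W m. pemit W m s ob \<ge> 0) \<and> (\<Sum>ob\<in>Ob W m. pemit W m s ob) = 1) \<and>
        (\<forall>s\<in>St W m. \<forall>a\<in>Ac W m. (\<forall>s'\<in>St W m. ptrans W m s a s' \<ge> 0) \<and>
              (\<Sum>s'\<in>St W m. ptrans W m s a s') = 1)) \<and>
     (\<forall>j. bvec W j \<ge> 0) \<and> XA W \<noteq> {}"

type_synonym ('o,'a) jpolicy = "nat \<Rightarrow> (nat \<Rightarrow> 'o) \<Rightarrow> (nat \<Rightarrow> 'a) \<Rightarrow> real"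

definition ml_policy :: "('s,'o,'a,'q::finite) wcpomdp \<Rightarrow> nat \<Rightarrow> ('o,'a) jpolicy \<Rightarrow> bool" where
  "ml_policy W T \<delta> \<longleftrightarrow> (\<forall>t\<in>{1..T}. \<forall>ob\<in>XO W.
      (\<forall>a\<in>XA W. \<delta> t ob a \<ge> 0) \<and> (\<Sum>a\<in>XA W. \<delta> t ob a) = 1)"

definition det_policy :: "('s,'o,'a,'q::finite) wcpomdp \<Rightarrow> nat \<Rightarrow> ('o,'a) jpolicy \<Rightarrow> bool" where
  "det_policy W T \<delta> \<longleftrightarrow> (\<forall>t\<in>{1..T}. \<forall>ob\<in>XO W. \<forall>a\<in>XA W. \<delta> t ob a \<in> {0,1})"

definition comp_policy :: "('s,'o,'a,'q) wcpomdp \<Rightarrow> nat \<Rightarrow> nat \<Rightarrow> (nat \<Rightarrow> 'o \<Rightarrow> 'a \<Rightarrow> real) \<Rightarrow> bool" where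
  "comp_policy W T m \<delta>m \<longleftrightarrow> (\<forall>t\<in>{1..T}. \<forall>ob\<in>Ob W m.
      (\<forall>a\<in>Ac W m. \<delta>m t ob a \<ge> 0) \<and> (\<Sum>a\<in>Ac W m. \<delta>m t ob a) = 1)"

definition decomposable :: "('s,'o,'a,'q::finite) wcpomdp \<Rightarrow> nat \<Rightarrow> ('o,'a) jpolicy \<Rightarrow> bool" where
  "decomposable W T \<delta> \<longleftrightarrow> ml_policy W T \<delta> \<and>
     (\<exists>\<delta>c :: nat \<Rightarrow> nat \<Rightarrow> 'o \<Rightarrow> 'a \<Rightarrow> real.
        (\<forall>m<ncomp W. comp_policy W T m (\<delta>c m)) \<and>
        (\<forall>t\<in>{1..T}. \<forall>ob\<in>XO W. \<forall>a\<in>XA W. \<delta> t ob a = (\<Prod>m<ncomp W. \<delta>c m t (ob m) (a m))))"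

text \<open>Marginal law of the state at time n+1 under policy delta
  (S_1 ~ p, O_t ~ p(.|S_t), A_t ~ delta^t(.|O_t), S_{t+1} ~ p(.|S_t,A_t)).\<close>
primrec sdist :: "('s,'o,'a,'q::finite) wcpomdp \<Rightarrow> ('o,'a) jpolicy \<Rightarrow> nat \<Rightarrow> (nat \<Rightarrow> 's) \<Rightarrow> real" where
  "sdist W \<delta> 0 s' = P0 W s'"
| "sdist W \<delta> (Suc n) s' =
     (\<Sum>s\<in>XS W. \<Sum>ob\<in>XO W. \<Sum>a\<in>XA W. sdist W \<delta> n s * PE W s ob * \<delta> (Suc n) ob a * PT W s a s')"

definition pvalue :: "('s,'o,'a,'q::finite) wcpomdp \<Rightarrow> nat \<Rightarrow> ('o,'a) jpolicy \<Rightarrow> real" where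
  "pvalue W T \<delta> = (\<Sum>t\<in>{1..T}. \<Sum>s\<in>XS W. \<Sum>ob\<in>XO W. \<Sum>a\<in>XA W. \<Sum>s'\<in>XS W.
      sdist W \<delta> (t - 1) s * PE W s ob * \<delta> t ob a * PT W s a s' * RW W s a s')"

definition v_ml :: "('s,'o,'a,'q::finite) wcpomdp \<Rightarrow> nat \<Rightarrow> real" where
  "v_ml W T = Sup {pvalue W T \<delta> | \<delta>. ml_policy W T \<delta>}"

record ('s,'o,'a) tauvar =
  tS   :: "nat \<Rightarrow> 's \<Rightarrow> real"                 \<comment> \<open>tau^t_s (used at t = 1)\<close>
  tSOA :: "nat \<Rightarrow> 's \<Rightarrow> 'o \<Rightarrow> 'a \<Rightarrow> real"
  tSAS :: "nat \<Rightarrow> 's \<Rightarrow> 'a \<Rightarrow> 's \<Rightarrow> real"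

definition nuv :: "'s set \<Rightarrow> 'a set \<Rightarrow> ('s,'o,'a) tauvar \<Rightarrow> nat \<Rightarrow> 's \<Rightarrow> real" where
  "nuv S A \<tau> t s = (if t = 1 then tS \<tau> 1 s
                    else (\<Sum>s''\<in>S. \<Sum>a''\<in>A. tSAS \<tau> (t - 1) s'' a'' s))"

definition Qd :: "nat \<Rightarrow> 's set \<Rightarrow> 'o set \<Rightarrow> 'a set \<Rightarrow> ('s \<Rightarrow> real) \<Rightarrow> ('s \<Rightarrow> 'o \<Rightarrow> real)
     \<Rightarrow> ('s \<Rightarrow> 'a \<Rightarrow> 's \<Rightarrow> real) \<Rightarrow> ('s,'o,'a) tauvar \<Rightarrow> (nat \<Rightarrow> 'o \<Rightarrow> 'a \<Rightarrow> real) \<Rightarrow> bool" where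
  "Qd T Ss Os As p po ps \<tau> \<delta> \<longleftrightarrow>
     (\<forall>t\<in>{1..T}. \<forall>ob\<in>Os. (\<forall>a\<in>As. \<delta> t ob a \<in> {0,1}) \<and> (\<Sum>a\<in>As. \<delta> t ob a) = 1) \<and>
     (\<forall>s\<in>Ss. tS \<tau> 1 s \<ge> 0) \<and>
     (\<forall>t\<in>{1..T}. \<forall>s\<in>Ss.
        (\<forall>ob\<in>Os. \<forall>a\<in>As. tSOA \<tau> t s ob a \<ge> 0) \<and> (\<forall>a\<in>As. \<forall>s'\<in>Ss. tSAS \<tau> t s a s' \<ge> 0)) \<and>
     (\<forall>s\<in>Ss. tS \<tau> 1 s = p s) \<and>
     (\<forall>t\<in>{1..T}. \<forall>s\<in>Ss. (\<Sum>ob\<in>Os. \<Sum>a\<in>As. tSOA \<tau> t s ob a) = nuv Ss As \<tau> t s) \<and>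
     (\<forall>t\<in>{1..T}. \<forall>s\<in>Ss. \<forall>a\<in>As. (\<Sum>sb\<in>Ss. tSAS \<tau> t s a sb) = (\<Sum>ob\<in>Os. tSOA \<tau> t s ob a)) \<and>
     (\<forall>t\<in>{1..T}. \<forall>s\<in>Ss. \<forall>a\<in>As. \<forall>s'\<in>Ss.
        tSAS \<tau> t s a s' = ps s a s' * (\<Sum>sb\<in>Ss. tSAS \<tau> t s a sb)) \<and>
     (\<forall>t\<in>{1..T}. \<forall>s\<in>Ss. \<forall>ob\<in>Os. \<forall>a\<in>As.
        tSOA \<tau> t s ob a \<le> po s ob * nuv Ss As \<tau> t s \<and>
        tSOA \<tau> t s ob a \<le> \<delta> t ob a \<and>
        tSOA \<tau> t s ob a \<ge> po s ob * nuv Ss As \<tau> t s + \<delta> t ob a - 1)"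

definition comp_Qd :: "('s,'o,'a,'q) wcpomdp \<Rightarrow> nat \<Rightarrow> nat \<Rightarrow> ('s,'o,'a) tauvar
     \<Rightarrow> (nat \<Rightarrow> 'o \<Rightarrow> 'a \<Rightarrow> real) \<Rightarrow> bool" where
  "comp_Qd W T m \<tau> \<delta> = Qd T (St W m) (Ob W m) (Ac W m) (pinit W m) (pemit W m) (ptrans W m) \<tau> \<delta>"

definition milp_obj :: "('s,'o,'a,'q) wcpomdp \<Rightarrow> nat \<Rightarrow> (nat \<Rightarrow> ('s,'o,'a) tauvar) \<Rightarrow> real" where
  "milp_obj W T \<tau> = (\<Sum>t\<in>{1..T}. \<Sum>m<ncomp W. \<Sum>s\<in>St W m. \<Sum>a\<in>Ac W m. \<Sum>s'\<in>St W m.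
      rew W m s a s' * tSAS (\<tau> m) t s a s')"

text \<open>Feasibility for MILP (IP): tau^{t,m}_a = sum_{s,ob} tau^{t,m}_{soa}.\<close>
definition IP_feasible :: "('s,'o,'a,'q::finite) wcpomdp \<Rightarrow> nat \<Rightarrow> (nat \<Rightarrow> ('s,'o,'a) tauvar)
     \<Rightarrow> (nat \<Rightarrow> nat \<Rightarrow> 'o \<Rightarrow> 'a \<Rightarrow> real) \<Rightarrow> bool" where
  "IP_feasible W T \<tau> \<delta> \<longleftrightarrow> (\<forall>m<ncomp W. comp_Qd W T m (\<tau> m) (\<delta> m)) \<and>
     (\<forall>t\<in>{1..T}. \<forall>j. (\<Sum>m<ncomp W. \<Sum>a\<in>Ac W m.
         Dm W m a j * (\<Sum>s\<in>St W m. \<Sum>ob\<in>Ob W m. tSOA (\<tau> m) t s ob a)) \<le> bvec W j)"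

definition LB_feasible :: "('s,'o,'a,'q::finite) wcpomdp \<Rightarrow> nat \<Rightarrow> (nat \<Rightarrow> ('s,'o,'a) tauvar)
     \<Rightarrow> (nat \<Rightarrow> nat \<Rightarrow> 'o \<Rightarrow> 'a \<Rightarrow> real) \<Rightarrow> bool" where
  "LB_feasible W T \<tau> \<delta> \<longleftrightarrow> (\<forall>m<ncomp W. comp_Qd W T m (\<tau> m) (\<delta> m)) \<and>
     (\<forall>ob\<in>XO W. \<forall>t\<in>{1..T}. \<forall>j.
        (\<Sum>m<ncomp W. \<Sum>a\<in>Ac W m. Dm W m a j * \<delta> m t (ob m) a) \<le> bvec W j)"

definition z_IP :: "('s,'o,'a,'q::finite) wcpomdp \<Rightarrow> nat \<Rightarrow> real" where
  "z_IP W T = Sup {milp_obj W T \<tau> | \<tau> \<delta>. IP_feasible W T \<tau> \<delta>}"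

definition LB_optimal :: "('s,'o,'a,'q::finite) wcpomdp \<Rightarrow> nat \<Rightarrow> (nat \<Rightarrow> ('s,'o,'a) tauvar)
     \<Rightarrow> (nat \<Rightarrow> nat \<Rightarrow> 'o \<Rightarrow> 'a \<Rightarrow> real) \<Rightarrow> bool" where
  "LB_optimal W T \<tau> \<delta> \<longleftrightarrow> LB_feasible W T \<tau> \<delta> \<and>
     (\<forall>\<tau>' \<delta>'. LB_feasible W T \<tau>' \<delta>' \<longrightarrow> milp_obj W T \<tau>' \<le> milp_obj W T \<tau>)"

definition prod_policy :: "('s,'o,'a,'q) wcpomdp \<Rightarrow> (nat \<Rightarrow> nat \<Rightarrow> 'o \<Rightarrow> 'a \<Rightarrow> real) \<Rightarrow> ('o,'a) jpolicy" where
  "prod_policy W \<delta> t ob a = (\<Prod>m<ncomp W. \<delta> m t (ob m) (a m))"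

end

theory Submission
  imports Defs
begin


primrec cd :: "('s,'o,'a,'q) wcpomdp \<Rightarrow> nat \<Rightarrow> (nat \<Rightarrow> 'o \<Rightarrow> 'a \<Rightarrow> real) \<Rightarrow> nat \<Rightarrow> 's \<Rightarrow> real" where
  "cd W m d 0 s = pinit W m s"
| "cd W m d (Suc n) s' = (\<Sum>s\<in>St W m. \<Sum>ob\<in>Ob W m. \<Sum>a\<in>Ac W m.
      cd W m d n s * pemit W m s ob * d (Suc n) ob a * ptrans W m s a s')"

lemma wcD:
  assumes "wc_valid W" "m < ncomp W"
  shows "finite (St W m)" "St W m \<noteq> {}" "finite (Ob W m)" "Ob W m \<noteq> {}"
    "finite (Ac W m)" "Ac W m \<noteq> {}"
    "\<And>s. s\<in>St W m \<Longrightarrow> pinit W m s \<ge> 0" "(\<Sum>s\<in>St W m. pinit W m s) = 1"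
    "\<And>s ob. s\<in>St W m \<Longrightarrow> ob \<in> Ob W m \<Longrightarrow> pemit W m s ob \<ge> 0"
    "\<And>s. s\<in>St W m \<Longrightarrow> (\<Sum>ob\<in>Ob W m. pemit W m s ob) = 1"
    "\<And>s a s'. s\<in>St W m \<Longrightarrow> a \<in> Ac W m \<Longrightarrow> s'\<in>St W m \<Longrightarrow> ptrans W m s a s' \<ge> 0"
    "\<And>s a. s\<in>St W m \<Longrightarrow> a \<in> Ac W m \<Longrightarrow> (\<Sum>s'\<in>St W m. ptrans W m s a s') = 1"
  using assms unfolding wc_valid_def by auto

lemma sum_swap4:
  "(\<Sum>x\<in>A. \<Sum>y\<in>B. \<Sum>z\<in>C. \<Sum>w\<in>D. f x y z w) = (\<Sum>y\<in>B. \<Sum>z\<in>C. \<Sum>w\<in>D. \<Sum>x\<in>A. f x y z w)"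
proof -
  have "(\<Sum>x\<in>A. \<Sum>y\<in>B. \<Sum>z\<in>C. \<Sum>w\<in>D. f x y z w) = (\<Sum>y\<in>B. \<Sum>x\<in>A. \<Sum>z\<in>C. \<Sum>w\<in>D. f x y z w)"
    by (rule sum.swap)
  also have "\<dots> = (\<Sum>y\<in>B. \<Sum>z\<in>C. \<Sum>x\<in>A. \<Sum>w\<in>D. f x y z w)"
    by (intro sum.cong refl) (rule sum.swap)
  also have "\<dots> = (\<Sum>y\<in>B. \<Sum>z\<in>C. \<Sum>w\<in>D. \<Sum>x\<in>A. f x y z w)"
    by (intro sum.cong refl) (rule sum.swap)
  finally show ?thesis .
qed

lemma sum_pull4:
  fixes f :: "_ \<Rightarrow> _ \<Rightarrow> _ \<Rightarrow> real"
  shows "(\<Sum>x\<in>A. \<Sum>y\<in>B. \<Sum>z\<in>C. \<Sum>w\<in>D. f y z w * g y w x) = (\<Sum>y\<in>B. \<Sum>z\<in>C. \<Sum>w\<in>D. f y z w * (\<Sum>x\<in>A. g y w x))"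
  by (subst sum_swap4) (simp add: sum_distrib_left)

lemma cd_mass:
  assumes W: "wc_valid W" "m < ncomp W" and d: "comp_policy W T m d"
  shows "n \<le> T \<Longrightarrow> (\<forall>s\<in>St W m. cd W m d n s \<ge> 0) \<and> (\<Sum>s\<in>St W m. cd W m d n s) = 1"
proof (induction n)
  case 0
  then show ?case using wcD[OF W] by simp
next
  case (Suc n)
  then have IH: "\<forall>s\<in>St W m. cd W m d n s \<ge> 0" "(\<Sum>s\<in>St W m. cd W m d n s) = 1" by auto
  have dd: "\<And>ob a. ob \<in> Ob W m \<Longrightarrow> a \<in> Ac W m \<Longrightarrow> d (Suc n) ob a \<ge> 0"
    "\<And>ob. ob \<in> Ob W m \<Longrightarrow> (\<Sum>a\<in>Ac W m. d (Suc n) ob a) = 1"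
    using d Suc.prems unfolding comp_policy_def by auto
  have "(\<Sum>s'\<in>St W m. cd W m d (Suc n) s') =
     (\<Sum>s\<in>St W m. \<Sum>ob\<in>Ob W m. \<Sum>a\<in>Ac W m. cd W m d n s * pemit W m s ob * d (Suc n) ob a *
        (\<Sum>s'\<in>St W m. ptrans W m s a s'))"
    by (simp add: sum_pull4)
  also have "\<dots> = (\<Sum>s\<in>St W m. cd W m d n s * (\<Sum>ob\<in>Ob W m. pemit W m s ob * (\<Sum>a\<in>Ac W m. d (Suc n) ob a)))"
    using wcD(12)[OF W] by (simp add: sum_distrib_left mult.assoc)
  also have "\<dots> = 1" using wcD(10)[OF W] dd(2) IH(2) by simp
  finally have "(\<Sum>s'\<in>St W m. cd W m d (Suc n) s') = 1" .
  moreover have "\<forall>s\<in>St W m. cd W m d (Suc n) s \<ge> 0"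
    using IH(1) dd(1) wcD[OF W] by (auto intro!: sum_nonneg mult_nonneg_nonneg)
  ultimately show ?case by blast
qed

lemma QdD:
  assumes "comp_Qd W T m \<tau> d"
  shows "\<And>t ob a. t\<in>{1..T} \<Longrightarrow> ob\<in>Ob W m \<Longrightarrow> a\<in>Ac W m \<Longrightarrow> d t ob a \<in> {0,1}"
    "\<And>t ob. t\<in>{1..T} \<Longrightarrow> ob\<in>Ob W m \<Longrightarrow> (\<Sum>a\<in>Ac W m. d t ob a) = 1"
    "\<And>t s ob a. t\<in>{1..T} \<Longrightarrow> s\<in>St W m \<Longrightarrow> ob\<in>Ob W m \<Longrightarrow> a\<in>Ac W m \<Longrightarrow> tSOA \<tau> t s ob a \<ge> 0"
    "\<And>t s a s'. t\<in>{1..T} \<Longrightarrow> s\<in>St W m \<Longrightarrow> a\<in>Ac W m \<Longrightarrow> s'\<in>St W m \<Longrightarrow> tSAS \<tau> t s a s' \<ge> 0"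
    "\<And>s. s\<in>St W m \<Longrightarrow> tS \<tau> 1 s = pinit W m s"
    "\<And>t s. t\<in>{1..T} \<Longrightarrow> s\<in>St W m \<Longrightarrow> (\<Sum>ob\<in>Ob W m. \<Sum>a\<in>Ac W m. tSOA \<tau> t s ob a) = nuv (St W m) (Ac W m) \<tau> t s"
    "\<And>t s a. t\<in>{1..T} \<Longrightarrow> s\<in>St W m \<Longrightarrow> a\<in>Ac W m \<Longrightarrow> (\<Sum>sb\<in>St W m. tSAS \<tau> t s a sb) = (\<Sum>ob\<in>Ob W m. tSOA \<tau> t s ob a)"
    "\<And>t s a s'. t\<in>{1..T} \<Longrightarrow> s\<in>St W m \<Longrightarrow> a\<in>Ac W m \<Longrightarrow> s'\<in>St W m \<Longrightarrow> tSAS \<tau> t s a s' = ptrans W m s a s' * (\<Sum>sb\<in>St W m. tSAS \<tau> t s a sb)"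
    "\<And>t s ob a. t\<in>{1..T} \<Longrightarrow> s\<in>St W m \<Longrightarrow> ob\<in>Ob W m \<Longrightarrow> a\<in>Ac W m \<Longrightarrow>
        tSOA \<tau> t s ob a \<le> pemit W m s ob * nuv (St W m) (Ac W m) \<tau> t s \<and>
        tSOA \<tau> t s ob a \<le> d t ob a \<and>
        tSOA \<tau> t s ob a \<ge> pemit W m s ob * nuv (St W m) (Ac W m) \<tau> t s + d t ob a - 1"
proof -
  note H = assms[unfolded comp_Qd_def Qd_def]
  note H1 = H[THEN conjunct1] and H2 = H[THEN conjunct2, THEN conjunct2, THEN conjunct1]
    and H3 = H[THEN conjunct2, THEN conjunct2, THEN conjunct2, THEN conjunct1]
    and H4 = H[THEN conjunct2, THEN conjunct2, THEN conjunct2, THEN conjunct2, THEN conjunct1]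
    and H5 = H[THEN conjunct2, THEN conjunct2, THEN conjunct2, THEN conjunct2, THEN conjunct2, THEN conjunct1]
    and H6 = H[THEN conjunct2, THEN conjunct2, THEN conjunct2, THEN conjunct2, THEN conjunct2, THEN conjunct2, THEN conjunct1]
    and H7 = H[THEN conjunct2, THEN conjunct2, THEN conjunct2, THEN conjunct2, THEN conjunct2, THEN conjunct2, THEN conjunct2]
  show "\<And>t ob a. t\<in>{1..T} \<Longrightarrow> ob\<in>Ob W m \<Longrightarrow> a\<in>Ac W m \<Longrightarrow> d t ob a \<in> {0,1}"
    using H1 by blast
  show "\<And>t ob. t\<in>{1..T} \<Longrightarrow> ob\<in>Ob W m \<Longrightarrow> (\<Sum>a\<in>Ac W m. d t ob a) = 1"
    using H1 by blast
  show "\<And>t s ob a. t\<in>{1..T} \<Longrightarrow> s\<in>St W m \<Longrightarrow> ob\<in>Ob W m \<Longrightarrow> a\<in>Ac W m \<Longrightarrow> tSOA \<tau> t s ob a \<ge> 0"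
    using H2 by blast
  show "\<And>t s a s'. t\<in>{1..T} \<Longrightarrow> s\<in>St W m \<Longrightarrow> a\<in>Ac W m \<Longrightarrow> s'\<in>St W m \<Longrightarrow> tSAS \<tau> t s a s' \<ge> 0"
    using H2 by blast
  show "\<And>s. s\<in>St W m \<Longrightarrow> tS \<tau> 1 s = pinit W m s"
    using H3 by blast
  show "\<And>t s. t\<in>{1..T} \<Longrightarrow> s\<in>St W m \<Longrightarrow> (\<Sum>ob\<in>Ob W m. \<Sum>a\<in>Ac W m. tSOA \<tau> t s ob a) = nuv (St W m) (Ac W m) \<tau> t s"
    using H4 by blast
  show "\<And>t s a. t\<in>{1..T} \<Longrightarrow> s\<in>St W m \<Longrightarrow> a\<in>Ac W m \<Longrightarrow> (\<Sum>sb\<in>St W m. tSAS \<tau> t s a sb) = (\<Sum>ob\<in>Ob W m. tSOA \<tau> t s ob a)"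
    using H5 by blast
  show "\<And>t s a s'. t\<in>{1..T} \<Longrightarrow> s\<in>St W m \<Longrightarrow> a\<in>Ac W m \<Longrightarrow> s'\<in>St W m \<Longrightarrow> tSAS \<tau> t s a s' = ptrans W m s a s' * (\<Sum>sb\<in>St W m. tSAS \<tau> t s a sb)"
    using H6 by blast
  show "\<And>t s ob a. t\<in>{1..T} \<Longrightarrow> s\<in>St W m \<Longrightarrow> ob\<in>Ob W m \<Longrightarrow> a\<in>Ac W m \<Longrightarrow>
        tSOA \<tau> t s ob a \<le> pemit W m s ob * nuv (St W m) (Ac W m) \<tau> t s \<and>
        tSOA \<tau> t s ob a \<le> d t ob a \<and>
        tSOA \<tau> t s ob a \<ge> pemit W m s ob * nuv (St W m) (Ac W m) \<tau> t s + d t ob a - 1"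
    using H7 by blast
qed

lemma tsoa_exact:
  assumes "comp_Qd W T m \<tau> d" "t\<in>{1..T}" "s\<in>St W m" "ob\<in>Ob W m" "a\<in>Ac W m"
  shows "tSOA \<tau> t s ob a = pemit W m s ob * nuv (St W m) (Ac W m) \<tau> t s * d t ob a"
proof -
  have "d t ob a \<in> {0,1}" using QdD(1)[OF assms(1)] assms by blast
  moreover have "tSOA \<tau> t s ob a \<ge> 0" using QdD(3)[OF assms(1)] assms by blast
  moreover note QdD(9)[OF assms(1,2,3,4,5)]
  ultimately show ?thesis by auto
qed

lemma qd_nuv:
  assumes W: "wc_valid W" "m < ncomp W" and Q: "comp_Qd W T m \<tau> d"
  shows "t\<in>{1..T} \<Longrightarrow> s \<in> St W m \<Longrightarrow> nuv (St W m) (Ac W m) \<tau> t s = cd W m d (t - 1) s"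
proof (induction t arbitrary: s)
  case 0
  then show ?case by simp
next
  case (Suc k)
  show ?case
  proof (cases "k = 0")
    case True
    then show ?thesis using QdD(5)[OF Q] Suc.prems by (simp add: nuv_def)
  next
    case False
    then have k: "k \<in> {1..T}" using Suc.prems by auto
    have "nuv (St W m) (Ac W m) \<tau> (Suc k) s = (\<Sum>s''\<in>St W m. \<Sum>a''\<in>Ac W m. tSAS \<tau> k s'' a'' s)"
      using False by (simp add: nuv_def)
    also have "\<dots> = (\<Sum>s''\<in>St W m. \<Sum>a''\<in>Ac W m. \<Sum>ob\<in>Ob W m.
        cd W m d (k - 1) s'' * pemit W m s'' ob * d k ob a'' * ptrans W m s'' a'' s)"
    proof (intro sum.cong refl)
      fix s'' a'' assume h: "s'' \<in> St W m" "a'' \<in> Ac W m"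
      have "tSAS \<tau> k s'' a'' s = ptrans W m s'' a'' s * (\<Sum>ob\<in>Ob W m. tSOA \<tau> k s'' ob a'')"
        using QdD(8)[OF Q k h Suc.prems(2)] QdD(7)[OF Q k h] by simp
      also have "\<dots> = (\<Sum>ob\<in>Ob W m. cd W m d (k - 1) s'' * pemit W m s'' ob * d k ob a'' * ptrans W m s'' a'' s)"
        using tsoa_exact[OF Q k h(1) _ h(2)] Suc.IH[OF k h(1)]
        by (simp add: sum_distrib_left mult.commute mult.left_commute)
      finally show "tSAS \<tau> k s'' a'' s = \<dots>" .
    qed
    also have "\<dots> = cd W m d (Suc (k - 1)) s"
      using False unfolding cd.simps(2) by (simp add: sum.swap[of _ "Ob W m"])
    finally show ?thesis using False by simp
  qed
qed

lemma sum_PiE_prod: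
  fixes f :: "_ \<Rightarrow> _ \<Rightarrow> real"
  assumes "finite I" "\<And>i. i \<in> I \<Longrightarrow> finite (S i)"
  shows "(\<Sum>x\<in>PiE I S. \<Prod>i\<in>I. f i (x i)) = (\<Prod>i\<in>I. \<Sum>y\<in>S i. f i y)"
  using prod_sum_PiE[where f=f and A=I and B=S] assms by simp

lemma sum3_PiE:
  fixes f :: "_ \<Rightarrow> _ \<Rightarrow> _ \<Rightarrow> _ \<Rightarrow> real"
  assumes "finite I" "\<And>i. i \<in> I \<Longrightarrow> finite (Ss i)" "\<And>i. i \<in> I \<Longrightarrow> finite (Os i)"
    "\<And>i. i \<in> I \<Longrightarrow> finite (As i)"
  shows "(\<Sum>s\<in>PiE I Ss. \<Sum>ob\<in>PiE I Os. \<Sum>a\<in>PiE I As. \<Prod>i\<in>I. f i (s i) (ob i) (a i))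
     = (\<Prod>i\<in>I. \<Sum>x\<in>Ss i. \<Sum>y\<in>Os i. \<Sum>z\<in>As i. f i x y z)"
proof -
  have "(\<Sum>s\<in>PiE I Ss. \<Sum>ob\<in>PiE I Os. \<Sum>a\<in>PiE I As. \<Prod>i\<in>I. f i (s i) (ob i) (a i))
     = (\<Sum>s\<in>PiE I Ss. \<Sum>ob\<in>PiE I Os. \<Prod>i\<in>I. \<Sum>z\<in>As i. f i (s i) (ob i) z)"
    by (intro sum.cong refl sum_PiE_prod[of I As "\<lambda>i z. f i (s i) (ob i) z" for s ob, OF assms(1,4)])
  also have "\<dots> = (\<Sum>s\<in>PiE I Ss. \<Prod>i\<in>I. \<Sum>y\<in>Os i. \<Sum>z\<in>As i. f i (s i) y z)"
    by (intro sum.cong refl sum_PiE_prod[of I Os "\<lambda>i y. \<Sum>z\<in>As i. f i (s i) y z" for s, OF assms(1,3)])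
  also have "\<dots> = (\<Prod>i\<in>I. \<Sum>x\<in>Ss i. \<Sum>y\<in>Os i. \<Sum>z\<in>As i. f i x y z)"
    by (intro sum.cong refl sum_PiE_prod[of I Ss "\<lambda>i x. \<Sum>y\<in>Os i. \<Sum>z\<in>As i. f i x y z", OF assms(1,2)])
  finally show ?thesis .
qed

lemma sum4_PiE:
  fixes f :: "_ \<Rightarrow> _ \<Rightarrow> _ \<Rightarrow> _ \<Rightarrow> _ \<Rightarrow> real"
  assumes "finite I" "\<And>i. i \<in> I \<Longrightarrow> finite (Ss i)" "\<And>i. i \<in> I \<Longrightarrow> finite (Os i)"
    "\<And>i. i \<in> I \<Longrightarrow> finite (As i)"
  shows "(\<Sum>s\<in>PiE I Ss. \<Sum>ob\<in>PiE I Os. \<Sum>a\<in>PiE I As. \<Sum>s'\<in>PiE I Ss. \<Prod>i\<in>I. f i (s i) (ob i) (a i) (s' i))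
     = (\<Prod>i\<in>I. \<Sum>x\<in>Ss i. \<Sum>y\<in>Os i. \<Sum>z\<in>As i. \<Sum>w\<in>Ss i. f i x y z w)"
proof -
  have "(\<Sum>s\<in>PiE I Ss. \<Sum>ob\<in>PiE I Os. \<Sum>a\<in>PiE I As. \<Sum>s'\<in>PiE I Ss. \<Prod>i\<in>I. f i (s i) (ob i) (a i) (s' i))
     = (\<Sum>s\<in>PiE I Ss. \<Sum>ob\<in>PiE I Os. \<Sum>a\<in>PiE I As. \<Prod>i\<in>I. \<Sum>w\<in>Ss i. f i (s i) (ob i) (a i) w)"
    by (intro sum.cong refl sum_PiE_prod[of I Ss "\<lambda>i w. f i (s i) (ob i) (a i) w" for s ob a, OF assms(1,2)])
  also have "\<dots> = (\<Prod>i\<in>I. \<Sum>x\<in>Ss i. \<Sum>y\<in>Os i. \<Sum>z\<in>As i. \<Sum>w\<in>Ss i. f i x y z w)"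
    by (rule sum3_PiE[OF assms])
  finally show ?thesis .
qed



lemma XS_eq: "XS W = PiE {..<ncomp W} (St W)" by (simp add: XS_def)
lemma XO_eq: "XO W = PiE {..<ncomp W} (Ob W)" by (simp add: XO_def)
lemma XA_sub: "XA W \<subseteq> PiE {..<ncomp W} (Ac W)" by (auto simp: XA_def)

lemma finite_XA: "wc_valid W \<Longrightarrow> finite (XA W)"
  by (rule finite_subset[OF XA_sub]) (auto intro!: finite_PiE dest: wcD)

lemma sum_XA_PiE:
  assumes "wc_valid W" "\<And>a. a \<in> PiE {..<ncomp W} (Ac W) \<Longrightarrow> a \<notin> XA W \<Longrightarrow> g a = 0"
  shows "(\<Sum>a\<in>XA W. g a) = (\<Sum>a\<in>PiE {..<ncomp W} (Ac W). g a)"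
proof (rule sum.mono_neutral_left)
  show "finite (PiE {..<ncomp W} (Ac W))" using assms(1) by (auto intro!: finite_PiE dest: wcD)
  show "XA W \<subseteq> PiE {..<ncomp W} (Ac W)" by (rule XA_sub)
  show "\<forall>i\<in>PiE {..<ncomp W} (Ac W) - XA W. g i = 0" using assms(2) by blast
qed

definition condC :: "('s,'o,'a,'q::finite) wcpomdp \<Rightarrow> nat \<Rightarrow> (nat \<Rightarrow> nat \<Rightarrow> 'o \<Rightarrow> 'a \<Rightarrow> real) \<Rightarrow> bool" where
  "condC W T dc \<longleftrightarrow> (\<forall>t\<in>{1..T}. \<forall>ob\<in>XO W. \<forall>a\<in>PiE {..<ncomp W} (Ac W). a \<notin> XA W \<longrightarrow>
      (\<Prod>m<ncomp W. dc m t (ob m) (a m)) = 0)"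

lemma prod_zero_ext:
  fixes f g :: "_ \<Rightarrow> real"
  assumes "finite I" "(\<Prod>i\<in>I. f i) = 0" "\<And>i. i \<in> I \<Longrightarrow> f i = 0 \<Longrightarrow> g i = 0"
  shows "(\<Prod>i\<in>I. g i) = 0"
  using assms by (auto simp: prod_zero_iff)

lemma sdist_fact:
  assumes W: "wc_valid W" and pol: "\<forall>m<ncomp W. comp_policy W T m (dc m)"
    and C: "condC W T dc"
    and agree: "\<forall>t\<in>{1..T}. \<forall>ob\<in>XO W. \<forall>a\<in>XA W. \<pi> t ob a = (\<Prod>m<ncomp W. dc m t (ob m) (a m))"
  shows "n \<le> T \<Longrightarrow> s \<in> XS W \<Longrightarrow> sdist W \<pi> n s = (\<Prod>m<ncomp W. cd W m (dc m) n (s m))"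
proof (induction n arbitrary: s)
  case 0
  then show ?case by (simp add: P0_def)
next
  case (Suc n)
  let ?I = "{..<ncomp W}"
  let ?F = "\<lambda>i x y z. cd W i (dc i) n x * pemit W i x y * dc i (Suc n) y z * ptrans W i x z (s i)"
  have fin: "finite ?I" "\<And>i. i \<in> ?I \<Longrightarrow> finite (St W i)" "\<And>i. i \<in> ?I \<Longrightarrow> finite (Ob W i)"
    "\<And>i. i \<in> ?I \<Longrightarrow> finite (Ac W i)" using wcD[OF W] by auto
  have t: "Suc n \<in> {1..T}" using Suc.prems by auto
  have "sdist W \<pi> (Suc n) s = (\<Sum>x\<in>XS W. \<Sum>ob\<in>XO W. \<Sum>a\<in>XA W. \<Prod>i\<in>?I. ?F i (x i) (ob i) (a i))"
    unfolding sdist.simps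
  proof (intro sum.cong refl)
    fix x ob a assume h: "x \<in> XS W" "ob \<in> XO W" "a \<in> XA W"
    show "sdist W \<pi> n x * PE W x ob * \<pi> (Suc n) ob a * PT W x a s = (\<Prod>i\<in>?I. ?F i (x i) (ob i) (a i))"
      using Suc.IH[OF _ h(1)] Suc.prems agree t h by (simp add: PE_def PT_def prod.distrib)
  qed
  also have "\<dots> = (\<Sum>x\<in>XS W. \<Sum>ob\<in>XO W. \<Sum>a\<in>PiE ?I (Ac W). \<Prod>i\<in>?I. ?F i (x i) (ob i) (a i))"
  proof (rule sum.cong[OF refl], rule sum.cong[OF refl], rule sum_XA_PiE[OF W])
    fix x ob a assume h: "x \<in> XS W" "ob \<in> XO W" "a \<in> PiE ?I (Ac W)" "a \<notin> XA W"
    have "(\<Prod>i\<in>?I. dc i (Suc n) (ob i) (a i)) = 0" using C h t unfolding condC_def by blast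
    then show "(\<Prod>i\<in>?I. ?F i (x i) (ob i) (a i)) = 0" by (rule prod_zero_ext[OF fin(1)]) simp
  qed
  also have "\<dots> = (\<Prod>i\<in>?I. \<Sum>x\<in>St W i. \<Sum>y\<in>Ob W i. \<Sum>z\<in>Ac W i. ?F i x y z)"
    unfolding XS_eq XO_eq by (rule sum3_PiE[OF fin])
  also have "\<dots> = (\<Prod>m<ncomp W. cd W m (dc m) (Suc n) (s m))" by simp
  finally show ?case .
qed

definition Rc :: "('s,'o,'a,'q) wcpomdp \<Rightarrow> nat \<Rightarrow> (nat \<Rightarrow> 'o \<Rightarrow> 'a \<Rightarrow> real) \<Rightarrow> nat \<Rightarrow> real" where
  "Rc W m d t = (\<Sum>x\<in>St W m. \<Sum>y\<in>Ob W m. \<Sum>z\<in>Ac W m. \<Sum>w\<in>St W m.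
      cd W m d (t - 1) x * pemit W m x y * d t y z * ptrans W m x z w * rew W m x z w)"

lemma comp_total:
  assumes W: "wc_valid W" "m < ncomp W" and d: "comp_policy W T m d" and t: "t \<in> {1..T}"
  shows "(\<Sum>x\<in>St W m. \<Sum>y\<in>Ob W m. \<Sum>z\<in>Ac W m. \<Sum>w\<in>St W m.
      cd W m d (t - 1) x * pemit W m x y * d t y z * ptrans W m x z w) = 1"
proof -
  have "(\<Sum>x\<in>St W m. \<Sum>y\<in>Ob W m. \<Sum>z\<in>Ac W m. \<Sum>w\<in>St W m.
      cd W m d (t - 1) x * pemit W m x y * d t y z * ptrans W m x z w)
    = (\<Sum>x\<in>St W m. \<Sum>y\<in>Ob W m. \<Sum>z\<in>Ac W m. cd W m d (t - 1) x * pemit W m x y * d t y z)"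
  proof (intro sum.cong refl)
    fix x y z assume "x \<in> St W m" "z \<in> Ac W m"
    then show "(\<Sum>w\<in>St W m. cd W m d (t - 1) x * pemit W m x y * d t y z * ptrans W m x z w) =
        cd W m d (t - 1) x * pemit W m x y * d t y z"
      using wcD(12)[OF W] by (simp add: sum_distrib_left[symmetric])
  qed
  also have "\<dots> = (\<Sum>x\<in>St W m. \<Sum>y\<in>Ob W m. cd W m d (t - 1) x * pemit W m x y)"
  proof (intro sum.cong refl)
    fix x y assume "x \<in> St W m" "y \<in> Ob W m"
    then show "(\<Sum>z\<in>Ac W m. cd W m d (t - 1) x * pemit W m x y * d t y z) = cd W m d (t - 1) x * pemit W m x y"
      using d t unfolding comp_policy_def by (simp add: sum_distrib_left[symmetric])
  qed
  also have "\<dots> = (\<Sum>x\<in>St W m. cd W m d (t - 1) x)"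
  proof (intro sum.cong refl)
    fix x assume "x \<in> St W m"
    then show "(\<Sum>y\<in>Ob W m. cd W m d (t - 1) x * pemit W m x y) = cd W m d (t - 1) x"
      using wcD(10)[OF W] by (simp add: sum_distrib_left[symmetric])
  qed
  also have "\<dots> = 1" using cd_mass[OF W d, of "t - 1"] t by auto
  finally show ?thesis .
qed

lemma sum_swap5:
  "(\<Sum>x\<in>A. \<Sum>y\<in>B. \<Sum>z\<in>C. \<Sum>w\<in>D. \<Sum>m\<in>E. f x y z w m) = (\<Sum>m\<in>E. \<Sum>x\<in>A. \<Sum>y\<in>B. \<Sum>z\<in>C. \<Sum>w\<in>D. f x y z w m)"
proof -
  have "(\<Sum>x\<in>A. \<Sum>y\<in>B. \<Sum>z\<in>C. \<Sum>w\<in>D. \<Sum>m\<in>E. f x y z w m) = (\<Sum>x\<in>A. \<Sum>y\<in>B. \<Sum>z\<in>C. \<Sum>m\<in>E. \<Sum>w\<in>D. f x y z w m)"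
    by (intro sum.cong refl) (rule sum.swap)
  also have "\<dots> = (\<Sum>x\<in>A. \<Sum>y\<in>B. \<Sum>m\<in>E. \<Sum>z\<in>C. \<Sum>w\<in>D. f x y z w m)"
    by (intro sum.cong refl) (rule sum.swap)
  also have "\<dots> = (\<Sum>x\<in>A. \<Sum>m\<in>E. \<Sum>y\<in>B. \<Sum>z\<in>C. \<Sum>w\<in>D. f x y z w m)"
    by (intro sum.cong refl) (rule sum.swap)
  also have "\<dots> = (\<Sum>m\<in>E. \<Sum>x\<in>A. \<Sum>y\<in>B. \<Sum>z\<in>C. \<Sum>w\<in>D. f x y z w m)"
    by (rule sum.swap)
  finally show ?thesis .
qed

lemma pvalue_fact:
  assumes W: "wc_valid W" and pol: "\<forall>m<ncomp W. comp_policy W T m (dc m)"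
    and C: "condC W T dc"
    and agree: "\<forall>t\<in>{1..T}. \<forall>ob\<in>XO W. \<forall>a\<in>XA W. \<pi> t ob a = (\<Prod>m<ncomp W. dc m t (ob m) (a m))"
  shows "pvalue W T \<pi> = (\<Sum>t\<in>{1..T}. \<Sum>m<ncomp W. Rc W m (dc m) t)"
  unfolding pvalue_def
proof (rule sum.cong[OF refl])
  fix t assume t: "t \<in> {1..T}"
  let ?I = "{..<ncomp W}"
  let ?F = "\<lambda>i x y z w. cd W i (dc i) (t - 1) x * pemit W i x y * dc i t y z * ptrans W i x z w"
  let ?G = "\<lambda>m i x y z w. ?F i x y z w * (if i = m then rew W i x z w else 1)"
  have fin: "finite ?I" "\<And>i. i \<in> ?I \<Longrightarrow> finite (St W i)" "\<And>i. i \<in> ?I \<Longrightarrow> finite (Ob W i)"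
    "\<And>i. i \<in> ?I \<Longrightarrow> finite (Ac W i)" using wcD[OF W] by auto
  have "(\<Sum>x\<in>XS W. \<Sum>ob\<in>XO W. \<Sum>a\<in>XA W. \<Sum>s'\<in>XS W.
      sdist W \<pi> (t - 1) x * PE W x ob * \<pi> t ob a * PT W x a s' * RW W x a s')
    = (\<Sum>x\<in>XS W. \<Sum>ob\<in>XO W. \<Sum>a\<in>XA W. \<Sum>s'\<in>XS W. \<Sum>m\<in>?I.
         \<Prod>i\<in>?I. ?G m i (x i) (ob i) (a i) (s' i))"
  proof (intro sum.cong refl)
    fix x ob a s' assume h: "x \<in> XS W" "ob \<in> XO W" "a \<in> XA W"
    have "sdist W \<pi> (t - 1) x * PE W x ob * \<pi> t ob a * PT W x a s' =
        (\<Prod>i\<in>?I. ?F i (x i) (ob i) (a i) (s' i))"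
    proof -
      have "t - 1 \<le> T" using t by auto
      then have "sdist W \<pi> (t - 1) x = (\<Prod>m<ncomp W. cd W m (dc m) (t - 1) (x m))"
        using sdist_fact[OF W pol C agree, of "t - 1" x] h by simp
      then show ?thesis using t h agree by (simp add: PE_def PT_def prod.distrib)
    qed
    moreover have "\<And>m. m \<in> ?I \<Longrightarrow> (\<Prod>i\<in>?I. ?G m i (x i) (ob i) (a i) (s' i)) =
        (\<Prod>i\<in>?I. ?F i (x i) (ob i) (a i) (s' i)) * rew W m (x m) (a m) (s' m)"
      by (simp add: prod.distrib prod.delta fin(1))
    ultimately show "sdist W \<pi> (t - 1) x * PE W x ob * \<pi> t ob a * PT W x a s' * RW W x a s' =
      (\<Sum>m\<in>?I. \<Prod>i\<in>?I. ?G m i (x i) (ob i) (a i) (s' i))"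
      by (simp add: RW_def sum_distrib_left)
  qed
  also have "\<dots> = (\<Sum>m\<in>?I. \<Sum>x\<in>XS W. \<Sum>ob\<in>XO W. \<Sum>a\<in>XA W. \<Sum>s'\<in>XS W.
         \<Prod>i\<in>?I. ?G m i (x i) (ob i) (a i) (s' i))"
    by (rule sum_swap5)
  also have "\<dots> = (\<Sum>m\<in>?I. \<Sum>x\<in>XS W. \<Sum>ob\<in>XO W. \<Sum>a\<in>PiE ?I (Ac W). \<Sum>s'\<in>XS W.
         \<Prod>i\<in>?I. ?G m i (x i) (ob i) (a i) (s' i))"
  proof (rule sum.cong[OF refl], rule sum.cong[OF refl], rule sum.cong[OF refl], rule sum_XA_PiE[OF W])
    fix m x ob a assume h: "m \<in> ?I" "x \<in> XS W" "ob \<in> XO W" "a \<in> PiE ?I (Ac W)" "a \<notin> XA W"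
    have "(\<Prod>i\<in>?I. dc i t (ob i) (a i)) = 0" using C h t unfolding condC_def by blast
    then show "(\<Sum>s'\<in>XS W. \<Prod>i\<in>?I. ?G m i (x i) (ob i) (a i) (s' i)) = 0"
      by (intro sum.neutral ballI, rule prod_zero_ext[OF fin(1)]) simp
  qed
  also have "\<dots> = (\<Sum>m\<in>?I. \<Prod>i\<in>?I. \<Sum>x\<in>St W i. \<Sum>y\<in>Ob W i. \<Sum>z\<in>Ac W i. \<Sum>w\<in>St W i. ?G m i x y z w)"
    unfolding XS_eq XO_eq by (intro sum.cong refl sum4_PiE[OF fin])
  also have "\<dots> = (\<Sum>m\<in>?I. Rc W m (dc m) t)"
  proof (rule sum.cong[OF refl])
    fix m assume m: "m \<in> ?I"
    have "(\<Prod>i\<in>?I. \<Sum>x\<in>St W i. \<Sum>y\<in>Ob W i. \<Sum>z\<in>Ac W i. \<Sum>w\<in>St W i. ?G m i x y z w)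
       = (\<Sum>x\<in>St W m. \<Sum>y\<in>Ob W m. \<Sum>z\<in>Ac W m. \<Sum>w\<in>St W m. ?G m m x y z w)"
    proof (rule trans[OF prod.remove[OF fin(1) m]])
      have "(\<Prod>i\<in>?I - {m}. \<Sum>x\<in>St W i. \<Sum>y\<in>Ob W i. \<Sum>z\<in>Ac W i. \<Sum>w\<in>St W i. ?G m i x y z w) = 1"
      proof (rule prod.neutral, rule ballI)
        fix i assume i: "i \<in> ?I - {m}"
        then show "(\<Sum>x\<in>St W i. \<Sum>y\<in>Ob W i. \<Sum>z\<in>Ac W i. \<Sum>w\<in>St W i. ?G m i x y z w) = 1"
          using comp_total[OF W _ _ t, of i "dc i"] pol by simp
      qed
      then show "(\<Sum>x\<in>St W m. \<Sum>y\<in>Ob W m. \<Sum>z\<in>Ac W m. \<Sum>w\<in>St W m. ?G m m x y z w) *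
          (\<Prod>i\<in>?I - {m}. \<Sum>x\<in>St W i. \<Sum>y\<in>Ob W i. \<Sum>z\<in>Ac W i. \<Sum>w\<in>St W i. ?G m i x y z w) =
          (\<Sum>x\<in>St W m. \<Sum>y\<in>Ob W m. \<Sum>z\<in>Ac W m. \<Sum>w\<in>St W m. ?G m m x y z w)" by simp
    qed
    also have "\<dots> = Rc W m (dc m) t" by (simp add: Rc_def)
    finally show "(\<Prod>i\<in>?I. \<Sum>x\<in>St W i. \<Sum>y\<in>Ob W i. \<Sum>z\<in>Ac W i. \<Sum>w\<in>St W i. ?G m i x y z w)
       = Rc W m (dc m) t" .
  qed
  finally show "(\<Sum>x\<in>XS W. \<Sum>ob\<in>XO W. \<Sum>a\<in>XA W. \<Sum>s'\<in>XS W.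
      sdist W \<pi> (t - 1) x * PE W x ob * \<pi> t ob a * PT W x a s' * RW W x a s')
    = (\<Sum>m<ncomp W. Rc W m (dc m) t)" .
qed

lemma qd_comp_policy:
  assumes "comp_Qd W T m \<tau> d"
  shows "comp_policy W T m d"
  unfolding comp_policy_def using QdD(1,2)[OF assms] by fastforce

lemma qd_tsoa:
  assumes W: "wc_valid W" "m < ncomp W" and Q: "comp_Qd W T m \<tau> d"
    and h: "t\<in>{1..T}" "s\<in>St W m" "ob\<in>Ob W m" "a\<in>Ac W m"
  shows "tSOA \<tau> t s ob a = pemit W m s ob * cd W m d (t - 1) s * d t ob a"
  using tsoa_exact[OF Q h] qd_nuv[OF W Q h(1,2)] by simp

lemma qd_obj_comp:
  assumes W: "wc_valid W" "m < ncomp W" and Q: "comp_Qd W T m \<tau> d" and t: "t\<in>{1..T}"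
  shows "(\<Sum>s\<in>St W m. \<Sum>a\<in>Ac W m. \<Sum>s'\<in>St W m. rew W m s a s' * tSAS \<tau> t s a s') = Rc W m d t"
proof -
  have "(\<Sum>s\<in>St W m. \<Sum>a\<in>Ac W m. \<Sum>s'\<in>St W m. rew W m s a s' * tSAS \<tau> t s a s') =
     (\<Sum>s\<in>St W m. \<Sum>a\<in>Ac W m. \<Sum>s'\<in>St W m. \<Sum>ob\<in>Ob W m.
        cd W m d (t - 1) s * pemit W m s ob * d t ob a * ptrans W m s a s' * rew W m s a s')"
  proof (intro sum.cong refl)
    fix s a s' assume h: "s \<in> St W m" "a \<in> Ac W m" "s' \<in> St W m"
    have "tSAS \<tau> t s a s' = ptrans W m s a s' * (\<Sum>ob\<in>Ob W m. tSOA \<tau> t s ob a)"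
      using QdD(8)[OF Q t h] QdD(7)[OF Q t h(1,2)] by simp
    also have "\<dots> = ptrans W m s a s' * (\<Sum>ob\<in>Ob W m. pemit W m s ob * cd W m d (t - 1) s * d t ob a)"
      using qd_tsoa[OF W Q t h(1) _ h(2)] by simp
    finally show "rew W m s a s' * tSAS \<tau> t s a s' = (\<Sum>ob\<in>Ob W m.
        cd W m d (t - 1) s * pemit W m s ob * d t ob a * ptrans W m s a s' * rew W m s a s')"
      by (simp add: sum_distrib_left mult_ac)
  qed
  also have "\<dots> = (\<Sum>s\<in>St W m. \<Sum>a\<in>Ac W m. \<Sum>ob\<in>Ob W m. \<Sum>s'\<in>St W m.
        cd W m d (t - 1) s * pemit W m s ob * d t ob a * ptrans W m s a s' * rew W m s a s')"
    by (intro sum.cong refl) (rule sum.swap)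
  also have "\<dots> = Rc W m d t"
    unfolding Rc_def by (intro sum.cong refl) (rule sum.swap)
  finally show ?thesis .
qed

lemma milp_obj_eq:
  assumes W: "wc_valid W" and Q: "\<forall>m<ncomp W. comp_Qd W T m (\<tau> m) (d m)"
  shows "milp_obj W T \<tau> = (\<Sum>t\<in>{1..T}. \<Sum>m<ncomp W. Rc W m (d m) t)"
  unfolding milp_obj_def using qd_obj_comp[OF W _ Q[rule_format]] by simp

lemma det_point:
  fixes f :: "_ \<Rightarrow> real"
  assumes "finite A" "\<forall>a\<in>A. f a \<in> {0,1}" "sum f A = 1" "a0 \<in> A" "f a0 \<noteq> 0"
  shows "\<forall>a\<in>A. f a = (if a = a0 then 1 else 0)"
proof -
  have f0: "f a0 = 1" using assms by auto
  have "sum f A = f a0 + sum f (A - {a0})" using assms by (simp add: sum.remove)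
  then have "sum f (A - {a0}) = 0" using f0 assms by simp
  moreover have "\<forall>a\<in>A - {a0}. f a \<ge> 0" using assms(2) by auto
  ultimately have "\<forall>a\<in>A - {a0}. f a = 0" using assms(1) sum_nonneg_eq_0_iff[of "A - {a0}" f] by auto
  then show ?thesis using f0 by auto
qed

lemma det_D:
  fixes f :: "_ \<Rightarrow> real"
  assumes "finite A" "\<forall>a\<in>A. f a \<in> {0,1}" "sum f A = 1" "a0 \<in> A" "f a0 \<noteq> 0"
  shows "(\<Sum>a\<in>A. D a * f a) = D a0"
proof -
  have "(\<Sum>a\<in>A. D a * f a) = (\<Sum>a\<in>A. if a = a0 then D a else 0)"
    using det_point[OF assms] by (intro sum.cong) auto
  then show ?thesis using assms by (simp add: sum.delta)
qed

lemma budget_XA: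
  assumes W: "wc_valid W"
    and det: "\<forall>m<ncomp W. (\<forall>a\<in>Ac W m. d m a \<in> {0,1}) \<and> (\<Sum>a\<in>Ac W m. d m a) = 1"
    and bud: "\<forall>j. (\<Sum>m<ncomp W. \<Sum>a\<in>Ac W m. Dm W m a j * d m a) \<le> bvec W j"
    and A: "A \<in> PiE {..<ncomp W} (Ac W)" and nz: "(\<Prod>m<ncomp W. d m (A m)) \<noteq> 0"
  shows "A \<in> XA W"
proof -
  have "\<forall>m<ncomp W. d m (A m) \<noteq> 0" using nz by (auto simp: prod_zero_iff)
  then have "\<forall>m<ncomp W. (\<Sum>a\<in>Ac W m. Dm W m a j * d m a) = Dm W m (A m) j" for j
    using det A wcD[OF W] by (auto intro!: det_D)
  then have "\<forall>j. (\<Sum>m<ncomp W. Dm W m (A m) j) \<le> bvec W j" using bud by simp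
  then show ?thesis using A unfolding XA_def by blast
qed

lemma LB_condC:
  assumes W: "wc_valid W" and LB: "LB_feasible W T \<tau> \<delta>"
  shows "condC W T \<delta>"
  unfolding condC_def
proof (intro ballI impI)
  fix t ob a assume h: "t \<in> {1..T}" "ob \<in> XO W" "a \<in> PiE {..<ncomp W} (Ac W)" "a \<notin> XA W"
  have Q: "\<forall>m<ncomp W. comp_Qd W T m (\<tau> m) (\<delta> m)" using LB unfolding LB_feasible_def by blast
  have det: "\<forall>m<ncomp W. (\<forall>x\<in>Ac W m. \<delta> m t (ob m) x \<in> {0,1}) \<and> (\<Sum>x\<in>Ac W m. \<delta> m t (ob m) x) = 1"
  proof (intro allI impI conjI ballI)
    fix m x assume m: "m < ncomp W"
    have obm: "ob m \<in> Ob W m" using h(2) m by (auto simp: XO_def PiE_iff)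
    show "x \<in> Ac W m \<Longrightarrow> \<delta> m t (ob m) x \<in> {0,1}" using QdD(1)[OF Q[rule_format, OF m] h(1) obm] by blast
    show "(\<Sum>x\<in>Ac W m. \<delta> m t (ob m) x) = 1" using QdD(2)[OF Q[rule_format, OF m] h(1) obm] by blast
  qed
  have bud: "\<forall>j. (\<Sum>m<ncomp W. \<Sum>x\<in>Ac W m. Dm W m x j * \<delta> m t (ob m) x) \<le> bvec W j"
    using LB h unfolding LB_feasible_def by blast
  show "(\<Prod>m<ncomp W. \<delta> m t (ob m) (a m)) = 0"
    using budget_XA[OF W det bud h(3)] h(4) by blast
qed



lemma prod01:
  fixes f :: "_ \<Rightarrow> real"
  assumes "finite I" "\<forall>i\<in>I. f i \<in> {0,1}"
  shows "prod f I \<in> {0,1}"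
  using assms by (induction I rule: finite_induct) auto

lemma obm_in: "ob \<in> XO W \<Longrightarrow> m < ncomp W \<Longrightarrow> ob m \<in> Ob W m"
  by (auto simp: XO_def PiE_iff)

lemma LB_Q: "LB_feasible W T \<tau> \<delta> \<Longrightarrow> m < ncomp W \<Longrightarrow> comp_Qd W T m (\<tau> m) (\<delta> m)"
  unfolding LB_feasible_def by blast

lemma LB_policy:
  assumes W: "wc_valid W" and LB: "LB_feasible W T \<tau> \<delta>"
  shows "ml_policy W T (prod_policy W \<delta>)" "det_policy W T (prod_policy W \<delta>)"
    "decomposable W T (prod_policy W \<delta>)"
proof -
  have C: "condC W T \<delta>" by (rule LB_condC[OF W LB])
  have fin: "finite {..<ncomp W}" "\<And>i. i \<in> {..<ncomp W} \<Longrightarrow> finite (Ac W i)" using wcD[OF W] by auto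
  have d01: "\<And>m t ob a. m < ncomp W \<Longrightarrow> t\<in>{1..T} \<Longrightarrow> ob \<in> XO W \<Longrightarrow> a \<in> Ac W m \<Longrightarrow> \<delta> m t (ob m) a \<in> {0,1}"
    using QdD(1)[OF LB_Q[OF LB]] obm_in by blast
  have dsum: "\<And>m t ob. m < ncomp W \<Longrightarrow> t\<in>{1..T} \<Longrightarrow> ob \<in> XO W \<Longrightarrow> (\<Sum>a\<in>Ac W m. \<delta> m t (ob m) a) = 1"
    using QdD(2)[OF LB_Q[OF LB]] obm_in by blast
  show ml: "ml_policy W T (prod_policy W \<delta>)"
    unfolding ml_policy_def
  proof (intro ballI conjI)
    fix t ob a assume h: "t \<in> {1..T}" "ob \<in> XO W" "a \<in> XA W"
    have "\<forall>m\<in>{..<ncomp W}. a m \<in> Ac W m" using h(3) XA_sub by (auto simp: PiE_iff)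
    then show "prod_policy W \<delta> t ob a \<ge> 0" unfolding prod_policy_def
      using d01 h by (intro prod_nonneg) fastforce
  next
    fix t ob assume h: "t \<in> {1..T}" "ob \<in> XO W"
    have "(\<Sum>a\<in>XA W. prod_policy W \<delta> t ob a) = (\<Sum>a\<in>PiE {..<ncomp W} (Ac W). \<Prod>m<ncomp W. \<delta> m t (ob m) (a m))"
      unfolding prod_policy_def using C h by (intro sum_XA_PiE[OF W]) (auto simp: condC_def)
    also have "\<dots> = (\<Prod>m<ncomp W. \<Sum>x\<in>Ac W m. \<delta> m t (ob m) x)"
      by (rule sum_PiE_prod[OF fin])
    also have "\<dots> = 1" using dsum h by simp
    finally show "(\<Sum>a\<in>XA W. prod_policy W \<delta> t ob a) = 1" .
  qed
  show "det_policy W T (prod_policy W \<delta>)"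
    unfolding det_policy_def prod_policy_def
  proof (intro ballI, rule prod01)
    fix t ob a assume h: "t \<in> {1..T}" "ob \<in> XO W" "a \<in> XA W"
    have "\<forall>m\<in>{..<ncomp W}. a m \<in> Ac W m" using h(3) XA_sub by (auto simp: PiE_iff)
    then show "\<forall>m\<in>{..<ncomp W}. \<delta> m t (ob m) (a m) \<in> {0,1}" using d01 h by blast
  qed simp
  show "decomposable W T (prod_policy W \<delta>)"
    unfolding decomposable_def
    using ml qd_comp_policy[OF LB_Q[OF LB]] by (auto simp: prod_policy_def)
qed

lemma prod_expect:
  fixes q :: "_ \<Rightarrow> _ \<Rightarrow> real"
  assumes fin: "finite I" "\<And>i. i \<in> I \<Longrightarrow> finite (S i)"
    and q1: "\<And>i. i \<in> I \<Longrightarrow> (\<Sum>y\<in>S i. q i y) = 1" and m: "m \<in> I"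
  shows "(\<Sum>x\<in>PiE I S. (\<Prod>i\<in>I. q i (x i)) * h (x m)) = (\<Sum>y\<in>S m. q m y * h y)"
proof -
  have "(\<Sum>x\<in>PiE I S. (\<Prod>i\<in>I. q i (x i)) * h (x m)) =
      (\<Sum>x\<in>PiE I S. \<Prod>i\<in>I. q i (x i) * (if i = m then h (x i) else 1))"
    using fin m by (simp add: prod.distrib prod.delta)
  also have "\<dots> = (\<Prod>i\<in>I. \<Sum>y\<in>S i. q i y * (if i = m then h y else 1))"
    by (rule sum_PiE_prod[OF fin])
  also have "\<dots> = (\<Sum>y\<in>S m. q m y * (if m = m then h y else 1)) *
      (\<Prod>i\<in>I - {m}. \<Sum>y\<in>S i. q i y * (if i = m then h y else 1))"
    by (rule prod.remove[OF fin(1) m])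
  also have "(\<Prod>i\<in>I - {m}. \<Sum>y\<in>S i. q i y * (if i = m then h y else 1)) = 1"
    using q1 by (intro prod.neutral) auto
  finally show ?thesis by simp
qed

lemma sum_swap3:
  "(\<Sum>x\<in>A. \<Sum>y\<in>B. \<Sum>z\<in>C. f x y z) = (\<Sum>z\<in>C. \<Sum>x\<in>A. \<Sum>y\<in>B. f x y z)"
proof -
  have "(\<Sum>x\<in>A. \<Sum>y\<in>B. \<Sum>z\<in>C. f x y z) = (\<Sum>x\<in>A. \<Sum>z\<in>C. \<Sum>y\<in>B. f x y z)"
    by (intro sum.cong refl) (rule sum.swap)
  also have "\<dots> = (\<Sum>z\<in>C. \<Sum>x\<in>A. \<Sum>y\<in>B. f x y z)" by (rule sum.swap)
  finally show ?thesis .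
qed

lemma LB_IP:
  assumes W: "wc_valid W" and LB: "LB_feasible W T \<tau> \<delta>"
  shows "IP_feasible W T \<tau> \<delta>"
  unfolding IP_feasible_def
proof (intro conjI allI impI ballI)
  show "\<And>m. m < ncomp W \<Longrightarrow> comp_Qd W T m (\<tau> m) (\<delta> m)" by (rule LB_Q[OF LB])
  fix t j assume t: "t \<in> {1..T}"
  let ?I = "{..<ncomp W}"
  define q where "q m y = (\<Sum>s\<in>St W m. pemit W m s y * cd W m (\<delta> m) (t - 1) s)" for m y
  define f where "f m y = (\<Sum>a\<in>Ac W m. Dm W m a j * \<delta> m t y a)" for m y
  have fin: "finite ?I" "\<And>i. i \<in> ?I \<Longrightarrow> finite (Ob W i)" using wcD[OF W] by auto
  have q1: "(\<Sum>y\<in>Ob W i. q i y) = 1" and q0: "\<forall>y\<in>Ob W i. q i y \<ge> 0" if i: "i \<in> ?I" for i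
  proof -
    have pol: "comp_policy W T i (\<delta> i)" using qd_comp_policy[OF LB_Q[OF LB]] i by auto
    have tt: "t - 1 \<le> T" using t by auto
    note cm = cd_mass[OF W _ pol tt] 
    have "(\<Sum>y\<in>Ob W i. q i y) = (\<Sum>s\<in>St W i. cd W i (\<delta> i) (t - 1) s * (\<Sum>y\<in>Ob W i. pemit W i s y))"
      unfolding q_def by (subst sum.swap) (simp add: sum_distrib_left sum_distrib_right mult_ac)
    also have "\<dots> = 1" using wcD(10)[OF W] cm i by simp
    finally show "(\<Sum>y\<in>Ob W i. q i y) = 1" .
    show "\<forall>y\<in>Ob W i. q i y \<ge> 0" unfolding q_def using cm i wcD(9)[OF W] by (auto intro!: sum_nonneg)
  qed
  have "(\<Sum>m<ncomp W. \<Sum>a\<in>Ac W m. Dm W m a j * (\<Sum>s\<in>St W m. \<Sum>ob\<in>Ob W m. tSOA (\<tau> m) t s ob a))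
      = (\<Sum>m<ncomp W. \<Sum>y\<in>Ob W m. q m y * f m y)"
  proof (rule sum.cong[OF refl])
    fix m assume m: "m \<in> ?I"
    have "(\<Sum>a\<in>Ac W m. Dm W m a j * (\<Sum>s\<in>St W m. \<Sum>ob\<in>Ob W m. tSOA (\<tau> m) t s ob a))
       = (\<Sum>a\<in>Ac W m. \<Sum>s\<in>St W m. \<Sum>y\<in>Ob W m. Dm W m a j * (pemit W m s y * cd W m (\<delta> m) (t - 1) s * \<delta> m t y a))"
      using qd_tsoa[OF W _ LB_Q[OF LB] t] m by (simp add: sum_distrib_left)
    also have "\<dots> = (\<Sum>y\<in>Ob W m. \<Sum>a\<in>Ac W m. \<Sum>s\<in>St W m. Dm W m a j * (pemit W m s y * cd W m (\<delta> m) (t - 1) s * \<delta> m t y a))"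
      by (rule sum_swap3)
    also have "\<dots> = (\<Sum>y\<in>Ob W m. q m y * f m y)"
      unfolding q_def f_def
      by (simp add: sum_distrib_left sum_distrib_right mult_ac, intro sum.cong refl, rule sum.swap)
    finally show "(\<Sum>a\<in>Ac W m. Dm W m a j * (\<Sum>s\<in>St W m. \<Sum>ob\<in>Ob W m. tSOA (\<tau> m) t s ob a))
       = (\<Sum>y\<in>Ob W m. q m y * f m y)" .
  qed
  also have "\<dots> = (\<Sum>m\<in>?I. \<Sum>ob\<in>XO W. (\<Prod>i\<in>?I. q i (ob i)) * f m (ob m))"
    unfolding XO_eq
  proof (rule sum.cong[OF refl])
    fix m assume m: "m \<in> ?I"
    show "(\<Sum>y\<in>Ob W m. q m y * f m y) = (\<Sum>ob\<in>PiE ?I (Ob W). (\<Prod>i\<in>?I. q i (ob i)) * f m (ob m))"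
      using prod_expect[where I="?I" and S="Ob W" and q=q and m=m and h="f m"] fin q1 m by simp
  qed
  also have "\<dots> = (\<Sum>ob\<in>XO W. (\<Prod>i\<in>?I. q i (ob i)) * (\<Sum>m\<in>?I. f m (ob m)))"
    by (subst sum.swap) (simp add: sum_distrib_left)
  also have "\<dots> \<le> (\<Sum>ob\<in>XO W. (\<Prod>i\<in>?I. q i (ob i)) * bvec W j)"
  proof (rule sum_mono)
    fix ob assume ob: "ob \<in> XO W"
    have "(\<Sum>m\<in>?I. f m (ob m)) \<le> bvec W j" using LB ob t unfolding LB_feasible_def f_def by blast
    moreover have "(\<Prod>i\<in>?I. q i (ob i)) \<ge> 0" using q0 ob obm_in by (intro prod_nonneg) blast
    ultimately show "(\<Prod>i\<in>?I. q i (ob i)) * (\<Sum>m\<in>?I. f m (ob m)) \<le> (\<Prod>i\<in>?I. q i (ob i)) * bvec W j"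
      by (simp add: mult_left_mono)
  qed
  also have "\<dots> = (\<Prod>i\<in>?I. \<Sum>y\<in>Ob W i. q i y) * bvec W j"
    unfolding XO_eq sum_distrib_right[symmetric] using sum_PiE_prod[where I="?I" and S="Ob W" and f=q] fin by simp
  also have "\<dots> = bvec W j" using q1 by simp
  finally show "(\<Sum>m<ncomp W. \<Sum>a\<in>Ac W m. Dm W m a j * (\<Sum>s\<in>St W m. \<Sum>ob\<in>Ob W m. tSOA (\<tau> m) t s ob a)) \<le> bvec W j" .
qed



definition mkt :: "('s,'o,'a,'q) wcpomdp \<Rightarrow> nat \<Rightarrow> (nat \<Rightarrow> 'o \<Rightarrow> 'a \<Rightarrow> real) \<Rightarrow> ('s,'o,'a) tauvar" where
  "mkt W m d = \<lparr>tS = (\<lambda>t s. pinit W m s),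
     tSOA = (\<lambda>t s ob a. pemit W m s ob * cd W m d (t - 1) s * d t ob a),
     tSAS = (\<lambda>t s a s'. ptrans W m s a s' * (\<Sum>ob\<in>Ob W m. pemit W m s ob * cd W m d (t - 1) s * d t ob a))\<rparr>"

lemma le1:
  fixes f :: "_ \<Rightarrow> real"
  assumes "finite A" "\<forall>x\<in>A. f x \<ge> 0" "sum f A = 1" "a \<in> A"
  shows "f a \<le> 1"
  using member_le_sum[of a A f] assms by auto

lemma mk_nuv:
  assumes W: "wc_valid W" "m < ncomp W" and t: "t \<in> {1..T}" and s: "s \<in> St W m"
  shows "nuv (St W m) (Ac W m) (mkt W m d) t s = cd W m d (t - 1) s"
proof (cases "t = 1")
  case True
  then show ?thesis by (simp add: nuv_def mkt_def)
next
  case False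
  then obtain k where k: "t = Suc (Suc k)" using t by (cases t; cases "t - 1") auto
  have "nuv (St W m) (Ac W m) (mkt W m d) t s = (\<Sum>s''\<in>St W m. \<Sum>a''\<in>Ac W m.
     ptrans W m s'' a'' s * (\<Sum>ob\<in>Ob W m. pemit W m s'' ob * cd W m d k s'' * d (Suc k) ob a''))"
    using k by (simp add: nuv_def mkt_def)
  also have "\<dots> = (\<Sum>s''\<in>St W m. \<Sum>a''\<in>Ac W m. \<Sum>ob\<in>Ob W m.
     cd W m d k s'' * pemit W m s'' ob * d (Suc k) ob a'' * ptrans W m s'' a'' s)"
    by (simp add: sum_distrib_left mult_ac)
  also have "\<dots> = cd W m d (t - 1) s"
    using k by (simp add: sum.swap[of _ "Ob W m"])
  finally show ?thesis .
qed

lemma mk_Qd: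
  assumes W: "wc_valid W" "m < ncomp W" and pol: "comp_policy W T m d"
    and det: "\<forall>t\<in>{1..T}. \<forall>ob\<in>Ob W m. \<forall>a\<in>Ac W m. d t ob a \<in> {0,1}"
  shows "comp_Qd W T m (mkt W m d) d"
proof -
  note w = wcD[OF W]
  have dsum: "\<And>t ob. t\<in>{1..T} \<Longrightarrow> ob\<in>Ob W m \<Longrightarrow> (\<Sum>a\<in>Ac W m. d t ob a) = 1"
    using pol unfolding comp_policy_def by blast
  have dnn: "\<And>t ob a. t\<in>{1..T} \<Longrightarrow> ob\<in>Ob W m \<Longrightarrow> a\<in>Ac W m \<Longrightarrow> d t ob a \<ge> 0"
  proof -
    fix t ob a assume "t\<in>{1..T}" "ob\<in>Ob W m" "a\<in>Ac W m"
    then have "d t ob a \<in> {0,1}" using det by blast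
    then show "d t ob a \<ge> 0" by auto
  qed
  have cdm: "\<And>t s. t\<in>{1..T} \<Longrightarrow> s \<in> St W m \<Longrightarrow> 0 \<le> cd W m d (t - 1) s \<and> cd W m d (t - 1) s \<le> 1"
  proof -
    fix t s assume t: "t\<in>{1..T}" and s: "s \<in> St W m"
    have "t - 1 \<le> T" using t by auto
    note cm = cd_mass[OF W pol this]
    show "0 \<le> cd W m d (t - 1) s \<and> cd W m d (t - 1) s \<le> 1"
      using cm s le1[of "St W m" "cd W m d (t - 1)" s] w(1) by auto
  qed
  have pem1: "\<And>s ob. s \<in> St W m \<Longrightarrow> ob \<in> Ob W m \<Longrightarrow> pemit W m s ob \<le> 1"
    using le1 w(3,9,10) by metis
  have soa_sum: "\<And>t s. t\<in>{1..T} \<Longrightarrow> s \<in> St W m \<Longrightarrow>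
     (\<Sum>ob\<in>Ob W m. \<Sum>a\<in>Ac W m. pemit W m s ob * cd W m d (t - 1) s * d t ob a) = cd W m d (t - 1) s"
  proof -
    fix t s assume t: "t\<in>{1..T}" and s: "s \<in> St W m"
    have "(\<Sum>ob\<in>Ob W m. \<Sum>a\<in>Ac W m. pemit W m s ob * cd W m d (t - 1) s * d t ob a) =
        (\<Sum>ob\<in>Ob W m. pemit W m s ob * cd W m d (t - 1) s * (\<Sum>a\<in>Ac W m. d t ob a))"
      by (simp add: sum_distrib_left)
    also have "\<dots> = (\<Sum>ob\<in>Ob W m. pemit W m s ob) * cd W m d (t - 1) s"
      using dsum t by (simp add: sum_distrib_right)
    also have "\<dots> = cd W m d (t - 1) s" using w(10) s by simp
    finally show "(\<Sum>ob\<in>Ob W m. \<Sum>a\<in>Ac W m. pemit W m s ob * cd W m d (t - 1) s * d t ob a) = cd W m d (t - 1) s" .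
  qed
  have sas_sum: "\<And>t s a. s \<in> St W m \<Longrightarrow> a \<in> Ac W m \<Longrightarrow>
     (\<Sum>sb\<in>St W m. tSAS (mkt W m d) t s a sb) = (\<Sum>ob\<in>Ob W m. tSOA (mkt W m d) t s ob a)"
    using w(12) by (simp add: mkt_def sum_distrib_right[symmetric])
  have mc: "\<And>t s ob a. t \<in> {1..T} \<Longrightarrow> s \<in> St W m \<Longrightarrow> ob \<in> Ob W m \<Longrightarrow> a \<in> Ac W m \<Longrightarrow>
        tSOA (mkt W m d) t s ob a \<le> pemit W m s ob * nuv (St W m) (Ac W m) (mkt W m d) t s \<and>
        tSOA (mkt W m d) t s ob a \<le> d t ob a \<and>
        pemit W m s ob * nuv (St W m) (Ac W m) (mkt W m d) t s + d t ob a - 1 \<le> tSOA (mkt W m d) t s ob a"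
  proof -
    fix t s ob a assume h: "t \<in> {1..T}" "s \<in> St W m" "ob \<in> Ob W m" "a \<in> Ac W m"
    have nu: "nuv (St W m) (Ac W m) (mkt W m d) t s = cd W m d (t - 1) s" by (rule mk_nuv[OF W h(1,2)])
    have pn: "0 \<le> pemit W m s ob * cd W m d (t - 1) s" "pemit W m s ob * cd W m d (t - 1) s \<le> 1"
      using cdm[OF h(1,2)] w(9)[OF h(2,3)] pem1[OF h(2,3)] by (auto intro: mult_le_one)
    have "d t ob a \<in> {0,1}" using det h by blast
    then show "tSOA (mkt W m d) t s ob a \<le> pemit W m s ob * nuv (St W m) (Ac W m) (mkt W m d) t s \<and>
        tSOA (mkt W m d) t s ob a \<le> d t ob a \<and>
        pemit W m s ob * nuv (St W m) (Ac W m) (mkt W m d) t s + d t ob a - 1 \<le> tSOA (mkt W m d) t s ob a"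
      using pn unfolding nu by (auto simp: mkt_def)
  qed
  show ?thesis
    unfolding comp_Qd_def Qd_def
  proof (intro conjI ballI)
    fix t ob assume "t \<in> {1..T}" "ob \<in> Ob W m"
    then show "(\<Sum>a\<in>Ac W m. d t ob a) = 1" by (rule dsum)
  next
    fix t ob a assume "t \<in> {1..T}" "ob \<in> Ob W m" "a \<in> Ac W m"
    then show "d t ob a \<in> {0,1}" using det by blast
  next
    fix s assume "s \<in> St W m" then show "0 \<le> tS (mkt W m d) 1 s" using w(7) by (simp add: mkt_def)
  next
    fix s assume "s \<in> St W m" then show "tS (mkt W m d) 1 s = pinit W m s" by (simp add: mkt_def)
  next
    fix t s ob a assume h: "t \<in> {1..T}" "s \<in> St W m" "ob \<in> Ob W m" "a \<in> Ac W m"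
    have "d t ob a \<in> {0,1}" using det h by blast
    then have "d t ob a \<ge> 0" by auto
    then show "0 \<le> tSOA (mkt W m d) t s ob a"
      using cdm[OF h(1,2)] w(9)[OF h(2,3)] by (simp add: mkt_def)
  next
    fix t s a s' assume h: "t \<in> {1..T}" "s \<in> St W m" "a \<in> Ac W m" "s' \<in> St W m"
    then show "0 \<le> tSAS (mkt W m d) t s a s'"
      using cdm[OF h(1,2)] w(9,11) dnn by (auto simp: mkt_def intro!: sum_nonneg mult_nonneg_nonneg)
  next
    fix t s assume h: "t \<in> {1..T}" "s \<in> St W m"
    then show "(\<Sum>ob\<in>Ob W m. \<Sum>a\<in>Ac W m. tSOA (mkt W m d) t s ob a) = nuv (St W m) (Ac W m) (mkt W m d) t s"
      using soa_sum[OF h] mk_nuv[OF W h, of d] by (simp add: mkt_def)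
  next
    fix t s a assume h: "t \<in> {1..T}" "s \<in> St W m" "a \<in> Ac W m"
    then show "(\<Sum>sb\<in>St W m. tSAS (mkt W m d) t s a sb) = (\<Sum>ob\<in>Ob W m. tSOA (mkt W m d) t s ob a)"
      using sas_sum by blast
  next
    fix t s a s' assume h: "t \<in> {1..T}" "s \<in> St W m" "a \<in> Ac W m" "s' \<in> St W m"
    then show "tSAS (mkt W m d) t s a s' = ptrans W m s a s' * (\<Sum>sb\<in>St W m. tSAS (mkt W m d) t s a sb)"
      using sas_sum by (simp add: mkt_def)
  next
    fix t s ob a assume h: "t \<in> {1..T}" "s \<in> St W m" "ob \<in> Ob W m" "a \<in> Ac W m"
    then show "tSOA (mkt W m d) t s ob a \<le> pemit W m s ob * nuv (St W m) (Ac W m) (mkt W m d) t s" using mc by blast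
  next
    fix t s ob a assume h: "t \<in> {1..T}" "s \<in> St W m" "ob \<in> Ob W m" "a \<in> Ac W m"
    then show "tSOA (mkt W m d) t s ob a \<le> d t ob a" using mc by blast
  next
    fix t s ob a assume h: "t \<in> {1..T}" "s \<in> St W m" "ob \<in> Ob W m" "a \<in> Ac W m"
    then show "pemit W m s ob * nuv (St W m) (Ac W m) (mkt W m d) t s + d t ob a - 1 \<le> tSOA (mkt W m d) t s ob a" using mc by blast
  qed
qed



lemma pol_bounds:
  assumes W: "wc_valid W" "i < ncomp W" and pol: "comp_policy W T i d"
    and h: "t \<in> {1..T}" "y \<in> Ob W i" "x \<in> Ac W i"
  shows "0 \<le> d t y x" "d t y x \<le> 1"
proof -
  have a: "\<forall>x\<in>Ac W i. d t y x \<ge> 0" "(\<Sum>x\<in>Ac W i. d t y x) = 1"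
    using pol h unfolding comp_policy_def by auto
  show "0 \<le> d t y x" using a h by auto
  show "d t y x \<le> 1" using le1[OF _ a(1) a(2) h(3)] wcD(5)[OF W] by simp
qed

lemma pol_pos:
  assumes W: "wc_valid W" "i < ncomp W" and pol: "comp_policy W T i d"
    and h: "t \<in> {1..T}" "y \<in> Ob W i"
  shows "\<exists>x\<in>Ac W i. d t y x > 0"
proof (rule ccontr)
  assume "\<not> ?thesis"
  then have "\<forall>x\<in>Ac W i. d t y x = 0" using pol_bounds[OF W pol h] by force
  then have "(\<Sum>x\<in>Ac W i. d t y x) = 0" by simp
  moreover have "(\<Sum>x\<in>Ac W i. d t y x) = 1" using pol h unfolding comp_policy_def by auto
  ultimately show False by simp
qed

lemma decomp_condC:
  assumes W: "wc_valid W" and ml: "ml_policy W T \<delta>'"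
    and pol: "\<forall>m<ncomp W. comp_policy W T m (dc m)"
    and agree: "\<forall>t\<in>{1..T}. \<forall>ob\<in>XO W. \<forall>a\<in>XA W. \<delta>' t ob a = (\<Prod>m<ncomp W. dc m t (ob m) (a m))"
  shows "condC W T dc"
  unfolding condC_def
proof (intro ballI impI)
  fix t ob a assume h: "t \<in> {1..T}" "ob \<in> XO W" "a \<in> PiE {..<ncomp W} (Ac W)" "a \<notin> XA W"
  let ?P = "PiE {..<ncomp W} (Ac W)"
  let ?g = "\<lambda>a. \<Prod>m<ncomp W. dc m t (ob m) (a m)"
  have finP: "finite ?P" using wcD[OF W] by (auto intro!: finite_PiE)
  have nn: "\<forall>a\<in>?P. ?g a \<ge> 0"
    using pol_bounds(1)[OF W _ pol[rule_format] h(1)] obm_in[OF h(2)]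
    by (auto simp: PiE_iff intro!: prod_nonneg)
  have "sum ?g ?P = (\<Prod>m<ncomp W. \<Sum>x\<in>Ac W m. dc m t (ob m) x)"
    by (rule sum_PiE_prod) (use wcD[OF W] in auto)
  also have "\<dots> = 1" using pol h(1) obm_in[OF h(2)] unfolding comp_policy_def by simp
  finally have s1: "sum ?g ?P = 1" .
  have "sum ?g (XA W) = (\<Sum>a\<in>XA W. \<delta>' t ob a)" using agree h by simp
  also have "\<dots> = 1" using ml h unfolding ml_policy_def by blast
  finally have s2: "sum ?g (XA W) = 1" .
  have "sum ?g ?P = sum ?g (?P - XA W) + sum ?g (XA W)"
    by (rule sum.subset_diff[OF XA_sub finP])
  then have "sum ?g (?P - XA W) = 0" using s1 s2 by simp
  then have "\<forall>a\<in>?P - XA W. ?g a = 0" using sum_nonneg_eq_0_iff[of "?P - XA W" ?g] finP nn by auto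
  then show "?g a = 0" using h by blast
qed

lemma decomp_det:
  assumes W: "wc_valid W" and ml: "ml_policy W T \<delta>'" and det: "det_policy W T \<delta>'"
    and pol: "\<forall>m<ncomp W. comp_policy W T m (dc m)"
    and agree: "\<forall>t\<in>{1..T}. \<forall>ob\<in>XO W. \<forall>a\<in>XA W. \<delta>' t ob a = (\<Prod>m<ncomp W. dc m t (ob m) (a m))"
    and m: "m < ncomp W" and t: "t \<in> {1..T}" and o: "y \<in> Ob W m" and a: "a \<in> Ac W m"
  shows "dc m t y a \<in> {0,1}"
proof (rule ccontr)
  assume nd: "dc m t y a \<notin> {0,1}"
  have C: "condC W T dc" by (rule decomp_condC[OF W ml pol agree])
  have b: "0 \<le> dc m t y a" "dc m t y a \<le> 1" using pol_bounds[OF W m pol[rule_format, OF m] t o a] by auto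
  then have lt: "0 < dc m t y a" "dc m t y a < 1" using nd by auto
  define ob where "ob i = (if i < ncomp W then (if i = m then y else SOME z. z \<in> Ob W i) else undefined)" for i
  have obX: "ob \<in> XO W" unfolding XO_def ob_def using o wcD(4)[OF W] by (auto simp: PiE_iff some_in_eq extensional_def)
  define A where "A i = (if i < ncomp W then (if i = m then a else SOME x. x \<in> Ac W i \<and> dc i t (ob i) x > 0) else undefined)" for i
  have Apos: "A i \<in> Ac W i \<and> dc i t (ob i) (A i) > 0" if i: "i < ncomp W" for i
  proof (cases "i = m")
    case True then show ?thesis using a lt m by (simp add: A_def ob_def)
  next
    case False
    have "\<exists>x\<in>Ac W i. dc i t (ob i) x > 0" using pol_pos[OF W i pol[rule_format, OF i] t obm_in[OF obX i]] .
    then have "\<exists>x. x \<in> Ac W i \<and> dc i t (ob i) x > 0" by blast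
    from someI_ex[OF this] show ?thesis using False i by (simp add: A_def)
  qed
  have AP: "A \<in> PiE {..<ncomp W} (Ac W)" using Apos by (auto simp: PiE_iff A_def extensional_def)
  have ppos: "(\<Prod>i<ncomp W. dc i t (ob i) (A i)) > 0" using Apos by (intro prod_pos) auto
  have AX: "A \<in> XA W"
  proof (rule ccontr)
    assume "A \<notin> XA W"
    then have "(\<Prod>i<ncomp W. dc i t (ob i) (A i)) = 0" using C obX AP t unfolding condC_def by blast
    then show False using ppos by linarith
  qed
  have "\<delta>' t ob A \<in> {0,1}" using det t obX AX unfolding det_policy_def by blast
  then have dv: "\<delta>' t ob A = 0 \<or> \<delta>' t ob A = 1" by blast
  have eqp: "\<delta>' t ob A = (\<Prod>i<ncomp W. dc i t (ob i) (A i))" using agree t obX AX by blast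
  have p1: "(\<Prod>i<ncomp W. dc i t (ob i) (A i)) = 1" using dv ppos unfolding eqp by linarith
  have "(\<Prod>i<ncomp W. dc i t (ob i) (A i)) = dc m t (ob m) (A m) * (\<Prod>i\<in>{..<ncomp W} - {m}. dc i t (ob i) (A i))"
    using prod.remove[of "{..<ncomp W}" m] m by simp
  moreover have "ob m = y" "A m = a" using m by (auto simp: A_def ob_def)
  ultimately have eq: "(\<Prod>i<ncomp W. dc i t (ob i) (A i)) = dc m t y a * (\<Prod>i\<in>{..<ncomp W} - {m}. dc i t (ob i) (A i))"
    by simp
  have r1: "(\<Prod>i\<in>{..<ncomp W} - {m}. dc i t (ob i) (A i)) \<le> 1"
    using Apos pol_bounds[OF W _ pol[rule_format] t obm_in[OF obX]] by (intro prod_le_1) auto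
  have "dc m t y a * (\<Prod>i\<in>{..<ncomp W} - {m}. dc i t (ob i) (A i)) \<le> dc m t y a"
    using mult_left_mono[OF r1, of "dc m t y a"] lt by simp
  then have "dc m t y a * (\<Prod>i\<in>{..<ncomp W} - {m}. dc i t (ob i) (A i)) < 1"
    using lt by linarith
  then show False using p1 eq by simp
qed



lemma decomp_LB:
  assumes W: "wc_valid W" and ml: "ml_policy W T \<delta>'" and det: "det_policy W T \<delta>'"
    and pol: "\<forall>m<ncomp W. comp_policy W T m (dc m)"
    and agree: "\<forall>t\<in>{1..T}. \<forall>ob\<in>XO W. \<forall>a\<in>XA W. \<delta>' t ob a = (\<Prod>m<ncomp W. dc m t (ob m) (a m))"
  shows "LB_feasible W T (\<lambda>m. mkt W m (dc m)) dc"
  unfolding LB_feasible_def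
proof (intro conjI allI impI ballI)
  have dd: "\<forall>t\<in>{1..T}. \<forall>ob\<in>Ob W m. \<forall>a\<in>Ac W m. dc m t ob a \<in> {0,1}" if m: "m < ncomp W" for m
    using decomp_det[OF W ml det pol agree m] by blast
  show "\<And>m. m < ncomp W \<Longrightarrow> comp_Qd W T m (mkt W m (dc m)) (dc m)"
    using mk_Qd[OF W _ pol[rule_format]] dd by blast
  fix ob t j assume ob: "ob \<in> XO W" and t: "t \<in> {1..T}"
  have C: "condC W T dc" by (rule decomp_condC[OF W ml pol agree])
  define A where "A i = (if i < ncomp W then SOME x. x \<in> Ac W i \<and> dc i t (ob i) x > 0 else undefined)" for i
  have Apos: "A i \<in> Ac W i \<and> dc i t (ob i) (A i) > 0" if i: "i < ncomp W" for i
  proof -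
    have "\<exists>x\<in>Ac W i. dc i t (ob i) x > 0" using pol_pos[OF W i pol[rule_format, OF i] t obm_in[OF ob i]] .
    then have "\<exists>x. x \<in> Ac W i \<and> dc i t (ob i) x > 0" by blast
    from someI_ex[OF this] show ?thesis using i by (simp add: A_def)
  qed
  have AP: "A \<in> PiE {..<ncomp W} (Ac W)" using Apos by (auto simp: PiE_iff A_def extensional_def)
  have ppos: "(\<Prod>i<ncomp W. dc i t (ob i) (A i)) > 0" using Apos by (intro prod_pos) auto
  have AX: "A \<in> XA W"
  proof (rule ccontr)
    assume "A \<notin> XA W"
    then have "(\<Prod>i<ncomp W. dc i t (ob i) (A i)) = 0" using C ob AP t unfolding condC_def by blast
    then show False using ppos by linarith
  qed
  have "(\<Sum>m<ncomp W. \<Sum>a\<in>Ac W m. Dm W m a j * dc m t (ob m) a) = (\<Sum>m<ncomp W. Dm W m (A m) j)"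
  proof (rule sum.cong[OF refl])
    fix m assume m: "m \<in> {..<ncomp W}"
    then have mm: "m < ncomp W" by simp
    show "(\<Sum>a\<in>Ac W m. Dm W m a j * dc m t (ob m) a) = Dm W m (A m) j"
    proof (rule det_D)
      show "finite (Ac W m)" using wcD(5)[OF W mm] .
      show "\<forall>a\<in>Ac W m. dc m t (ob m) a \<in> {0,1}" using dd[OF mm] t obm_in[OF ob mm] by blast
      show "sum (dc m t (ob m)) (Ac W m) = 1" using pol mm t obm_in[OF ob mm] unfolding comp_policy_def by blast
      show "A m \<in> Ac W m" "dc m t (ob m) (A m) \<noteq> 0" using Apos[OF mm] by auto
    qed
  qed
  also have "\<dots> \<le> bvec W j" using AX unfolding XA_def by blast
  finally show "(\<Sum>m<ncomp W. \<Sum>a\<in>Ac W m. Dm W m a j * dc m t (ob m) a) \<le> bvec W j" .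
qed

lemma LB_value:
  assumes W: "wc_valid W" and LB: "LB_feasible W T \<tau> \<delta>"
  shows "pvalue W T (prod_policy W \<delta>) = milp_obj W T \<tau>"
proof -
  have "pvalue W T (prod_policy W \<delta>) = (\<Sum>t\<in>{1..T}. \<Sum>m<ncomp W. Rc W m (\<delta> m) t)"
    by (rule pvalue_fact[OF W _ LB_condC[OF W LB]])
       (auto simp: prod_policy_def intro: qd_comp_policy[OF LB_Q[OF LB]])
  also have "\<dots> = milp_obj W T \<tau>"
    by (rule milp_obj_eq[OF W, symmetric]) (auto intro: LB_Q[OF LB])
  finally show ?thesis .
qed

lemma opt_part:
  assumes W: "wc_valid W" and opt: "LB_optimal W T \<tau> \<delta>"
    and ml: "ml_policy W T \<delta>'" and det: "det_policy W T \<delta>'" and dec: "decomposable W T \<delta>'"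
  shows "pvalue W T \<delta>' \<le> pvalue W T (prod_policy W \<delta>)"
proof -
  obtain dc where pol: "\<forall>m<ncomp W. comp_policy W T m (dc m)"
    and agree: "\<forall>t\<in>{1..T}. \<forall>ob\<in>XO W. \<forall>a\<in>XA W. \<delta>' t ob a = (\<Prod>m<ncomp W. dc m t (ob m) (a m))"
    using dec unfolding decomposable_def by blast
  have LB': "LB_feasible W T (\<lambda>m. mkt W m (dc m)) dc" by (rule decomp_LB[OF W ml det pol agree])
  have LB: "LB_feasible W T \<tau> \<delta>" using opt unfolding LB_optimal_def by blast
  have "pvalue W T \<delta>' = (\<Sum>t\<in>{1..T}. \<Sum>m<ncomp W. Rc W m (dc m) t)"
    by (rule pvalue_fact[OF W pol decomp_condC[OF W ml pol agree] agree])
  also have "\<dots> = milp_obj W T (\<lambda>m. mkt W m (dc m))"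
    by (rule milp_obj_eq[OF W, symmetric]) (auto intro: LB_Q[OF LB'])
  also have "\<dots> \<le> milp_obj W T \<tau>" using opt LB' unfolding LB_optimal_def by blast
  also have "\<dots> = pvalue W T (prod_policy W \<delta>)" using LB_value[OF W LB] by simp
  finally show ?thesis .
qed



lemma term_bound:
  fixes a b c d r :: real
  assumes "0 \<le> a" "a \<le> 1" "0 \<le> b" "b \<le> 1" "0 \<le> c" "c \<le> 1" "0 \<le> d" "d \<le> 1"
  shows "a * b * c * d * r \<le> \<bar>r\<bar>"
proof -
  have p0: "0 \<le> a * b * c * d" using assms by simp
  have p1: "a * b * c * d \<le> 1" using assms by (intro mult_le_one) (auto intro: mult_le_one)
  have "a * b * c * d * r \<le> a * b * c * d * \<bar>r\<bar>" using p0 by (intro mult_left_mono) auto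
  also have "\<dots> \<le> 1 * \<bar>r\<bar>" using p1 by (intro mult_right_mono) auto
  finally show ?thesis by simp
qed

lemma cd_bounds:
  assumes W: "wc_valid W" "m < ncomp W" and pol: "comp_policy W T m d" and t: "t \<in> {1..T}"
    and s: "s \<in> St W m"
  shows "0 \<le> cd W m d (t - 1) s" "cd W m d (t - 1) s \<le> 1"
proof -
  have "t - 1 \<le> T" using t by auto
  note cm = cd_mass[OF W pol this]
  show "0 \<le> cd W m d (t - 1) s" using cm s by auto
  show "cd W m d (t - 1) s \<le> 1" using cm s le1[of "St W m" "cd W m d (t - 1)" s] wcD(1)[OF W] by auto
qed

lemma Rc_bound:
  assumes W: "wc_valid W" "m < ncomp W" and pol: "comp_policy W T m d" and t: "t \<in> {1..T}"
  shows "Rc W m d t \<le> (\<Sum>x\<in>St W m. \<Sum>y\<in>Ob W m. \<Sum>z\<in>Ac W m. \<Sum>w\<in>St W m. \<bar>rew W m x z w\<bar>)"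
  unfolding Rc_def
proof (intro sum_mono)
  fix x y z w assume h: "x \<in> St W m" "y \<in> Ob W m" "z \<in> Ac W m" "w \<in> St W m"
  note wc = wcD[OF W]
  show "cd W m d (t - 1) x * pemit W m x y * d t y z * ptrans W m x z w * rew W m x z w \<le> \<bar>rew W m x z w\<bar>"
  proof (rule term_bound)
    show "0 \<le> cd W m d (t - 1) x" "cd W m d (t - 1) x \<le> 1" using cd_bounds[OF W pol t h(1)] by auto
    show "0 \<le> pemit W m x y" using wc(9) h by auto
    show "pemit W m x y \<le> 1" using le1[of "Ob W m" "pemit W m x" y] wc(3,9,10) h by auto
    show "0 \<le> d t y z" "d t y z \<le> 1" using pol_bounds[OF W pol t h(2,3)] by auto
    show "0 \<le> ptrans W m x z w" using wc(11) h by auto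
    show "ptrans W m x z w \<le> 1" using le1[of "St W m" "ptrans W m x z" w] wc(1,11,12) h by auto
  qed
qed

lemma zIP_bdd:
  assumes W: "wc_valid W"
  shows "bdd_above {milp_obj W T \<tau> | \<tau> \<delta>. IP_feasible W T \<tau> \<delta>}"
proof (rule bdd_aboveI)
  fix v assume "v \<in> {milp_obj W T \<tau> | \<tau> \<delta>. IP_feasible W T \<tau> \<delta>}"
  then obtain \<tau> \<delta> where v: "v = milp_obj W T \<tau>" and IP: "IP_feasible W T \<tau> \<delta>" by blast
  have Q: "\<forall>m<ncomp W. comp_Qd W T m (\<tau> m) (\<delta> m)" using IP unfolding IP_feasible_def by blast
  have "v = (\<Sum>t\<in>{1..T}. \<Sum>m<ncomp W. Rc W m (\<delta> m) t)" using v milp_obj_eq[OF W Q] by simp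
  also have "\<dots> \<le> (\<Sum>t\<in>{1..T}. \<Sum>m<ncomp W. \<Sum>x\<in>St W m. \<Sum>y\<in>Ob W m. \<Sum>z\<in>Ac W m. \<Sum>w\<in>St W m. \<bar>rew W m x z w\<bar>)"
    using Rc_bound[OF W _ qd_comp_policy[OF Q[rule_format]]] by (intro sum_mono) auto
  finally show "v \<le> (\<Sum>t\<in>{1..T}. \<Sum>m<ncomp W. \<Sum>x\<in>St W m. \<Sum>y\<in>Ob W m. \<Sum>z\<in>Ac W m. \<Sum>w\<in>St W m. \<bar>rew W m x z w\<bar>)" .
qed

lemma PE_props:
  assumes W: "wc_valid W" and s: "s \<in> XS W"
  shows "(\<Sum>ob\<in>XO W. PE W s ob) = 1" "\<And>ob. ob \<in> XO W \<Longrightarrow> PE W s ob \<ge> 0"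
proof -
  have sm: "\<And>m. m < ncomp W \<Longrightarrow> s m \<in> St W m" using s by (auto simp: XS_def PiE_iff)
  show "(\<Sum>ob\<in>XO W. PE W s ob) = 1"
    unfolding XO_eq PE_def using wcD(10)[OF W _ sm]
    by (subst sum_PiE_prod) (use wcD[OF W] in auto)
  fix ob assume ob: "ob \<in> XO W"
  show "PE W s ob \<ge> 0" unfolding PE_def using wcD(9)[OF W _ sm obm_in[OF ob]] by (auto intro!: prod_nonneg)
qed

lemma PT_props:
  assumes W: "wc_valid W" and s: "s \<in> XS W" and a: "a \<in> XA W"
  shows "(\<Sum>s'\<in>XS W. PT W s a s') = 1" "\<And>s'. s' \<in> XS W \<Longrightarrow> PT W s a s' \<ge> 0"
proof -
  have sm: "\<And>m. m < ncomp W \<Longrightarrow> s m \<in> St W m" using s by (auto simp: XS_def PiE_iff)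
  have am: "\<And>m. m < ncomp W \<Longrightarrow> a m \<in> Ac W m" using a XA_sub by (auto simp: PiE_iff)
  show "(\<Sum>s'\<in>XS W. PT W s a s') = 1"
    unfolding XS_eq PT_def using wcD(12)[OF W _ sm am]
    by (subst sum_PiE_prod) (use wcD[OF W] in auto)
  fix s' assume "s' \<in> XS W"
  then have "\<And>m. m < ncomp W \<Longrightarrow> s' m \<in> St W m" by (auto simp: XS_def PiE_iff)
  then show "PT W s a s' \<ge> 0" unfolding PT_def using wcD(11)[OF W _ sm am] by (auto intro!: prod_nonneg)
qed

lemma sdist_mass:
  assumes W: "wc_valid W" and ml: "ml_policy W T \<delta>"
  shows "n \<le> T \<Longrightarrow> (\<forall>s\<in>XS W. sdist W \<delta> n s \<ge> 0) \<and> (\<Sum>s\<in>XS W. sdist W \<delta> n s) = 1"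
proof (induction n)
  case 0
  have "(\<Sum>s\<in>XS W. P0 W s) = 1"
    unfolding XS_eq P0_def using wcD(8)[OF W]
    by (subst sum_PiE_prod) (use wcD[OF W] in auto)
  moreover have "\<forall>s\<in>XS W. P0 W s \<ge> 0"
    unfolding P0_def XS_def using wcD(7)[OF W] by (auto simp: PiE_iff intro!: prod_nonneg)
  ultimately show ?case by simp
next
  case (Suc n)
  then have IH: "\<forall>s\<in>XS W. sdist W \<delta> n s \<ge> 0" "(\<Sum>s\<in>XS W. sdist W \<delta> n s) = 1" by auto
  have t: "Suc n \<in> {1..T}" using Suc.prems by auto
  have dp: "\<And>ob a. ob \<in> XO W \<Longrightarrow> a \<in> XA W \<Longrightarrow> \<delta> (Suc n) ob a \<ge> 0"
    "\<And>ob. ob \<in> XO W \<Longrightarrow> (\<Sum>a\<in>XA W. \<delta> (Suc n) ob a) = 1"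
    using ml t unfolding ml_policy_def by auto
  have "(\<Sum>s'\<in>XS W. sdist W \<delta> (Suc n) s') =
     (\<Sum>s\<in>XS W. \<Sum>ob\<in>XO W. \<Sum>a\<in>XA W. sdist W \<delta> n s * PE W s ob * \<delta> (Suc n) ob a *
        (\<Sum>s'\<in>XS W. PT W s a s'))"
    by (simp add: sum_pull4)
  also have "\<dots> = (\<Sum>s\<in>XS W. sdist W \<delta> n s * (\<Sum>ob\<in>XO W. PE W s ob * (\<Sum>a\<in>XA W. \<delta> (Suc n) ob a)))"
    using PT_props(1)[OF W] by (simp add: sum_distrib_left mult.assoc)
  also have "\<dots> = 1" using PE_props(1)[OF W] dp(2) IH(2) by simp
  finally have "(\<Sum>s'\<in>XS W. sdist W \<delta> (Suc n) s') = 1" .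
  moreover have "\<forall>s'\<in>XS W. sdist W \<delta> (Suc n) s' \<ge> 0"
    using IH(1) dp(1) PE_props(2)[OF W] PT_props(2)[OF W]
    by (auto intro!: sum_nonneg mult_nonneg_nonneg)
  ultimately show ?case by blast
qed

lemma vml_bdd:
  assumes W: "wc_valid W"
  shows "bdd_above {pvalue W T \<delta> | \<delta>. ml_policy W T \<delta>}"
proof (rule bdd_aboveI)
  have finS: "finite (XS W)" "finite (XO W)" unfolding XS_def XO_def using wcD[OF W] by (auto intro!: finite_PiE)
  have finA: "finite (XA W)" by (rule finite_XA[OF W])
  fix v assume "v \<in> {pvalue W T \<delta> | \<delta>. ml_policy W T \<delta>}"
  then obtain \<delta> where v: "v = pvalue W T \<delta>" and ml: "ml_policy W T \<delta>" by blast
  have "pvalue W T \<delta> \<le> (\<Sum>t\<in>{1..T}. \<Sum>s\<in>XS W. \<Sum>ob\<in>XO W. \<Sum>a\<in>XA W. \<Sum>s'\<in>XS W. \<bar>RW W s a s'\<bar>)"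
    unfolding pvalue_def
  proof (intro sum_mono)
    fix t s ob a s' assume h: "t \<in> {1..T}" "s \<in> XS W" "ob \<in> XO W" "a \<in> XA W" "s' \<in> XS W"
    have tt: "t - 1 \<le> T" using h by auto
    note sm = sdist_mass[OF W ml tt]
    have dp: "\<forall>a\<in>XA W. \<delta> t ob a \<ge> 0" "(\<Sum>a\<in>XA W. \<delta> t ob a) = 1" using ml h unfolding ml_policy_def by auto
    show "sdist W \<delta> (t - 1) s * PE W s ob * \<delta> t ob a * PT W s a s' * RW W s a s' \<le> \<bar>RW W s a s'\<bar>"
    proof (rule term_bound)
      show "0 \<le> sdist W \<delta> (t - 1) s" using sm h by auto
      show "sdist W \<delta> (t - 1) s \<le> 1" using sm h le1[OF finS(1), of "sdist W \<delta> (t - 1)" s] by auto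
      show "0 \<le> PE W s ob" using PE_props(2)[OF W h(2,3)] .
      show "PE W s ob \<le> 1" using le1[OF finS(2), of "PE W s" ob] PE_props[OF W h(2)] h by auto
      show "0 \<le> \<delta> t ob a" using dp h by auto
      show "\<delta> t ob a \<le> 1" using le1[OF finA dp(1) dp(2) h(4)] .
      show "0 \<le> PT W s a s'" using PT_props(2)[OF W h(2,4,5)] .
      show "PT W s a s' \<le> 1" using le1[OF finS(1), of "PT W s a" s'] PT_props[OF W h(2,4)] h by auto
    qed
  qed
  then show "v \<le> (\<Sum>t\<in>{1..T}. \<Sum>s\<in>XS W. \<Sum>ob\<in>XO W. \<Sum>a\<in>XA W. \<Sum>s'\<in>XS W. \<bar>RW W s a s'\<bar>)"
    using v by simp
qed

theorem mainTheorem5: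
  fixes W :: "('s, 'o, 'a, 'q::finite) wcpomdp" and T :: nat
    and \<tau> :: "nat \<Rightarrow> ('s,'o,'a) tauvar" and \<delta> :: "nat \<Rightarrow> nat \<Rightarrow> 'o \<Rightarrow> 'a \<Rightarrow> real"
  assumes "wc_valid W"
    and "LB_optimal W T \<tau> \<delta>"
  shows "ml_policy W T (prod_policy W \<delta>) \<and> det_policy W T (prod_policy W \<delta>) \<and>
         decomposable W T (prod_policy W \<delta>) \<and>
         (\<forall>\<delta>'. ml_policy W T \<delta>' \<and> det_policy W T \<delta>' \<and> decomposable W T \<delta>' \<longrightarrow>
                pvalue W T \<delta>' \<le> pvalue W T (prod_policy W \<delta>)) \<and>
         (\<forall>\<tau>' \<delta>'. LB_feasible W T \<tau>' \<delta>' \<longrightarrow> IP_feasible W T \<tau>' \<delta>') \<and>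
         milp_obj W T \<tau> \<le> v_ml W T \<and>
         milp_obj W T \<tau> \<le> z_IP W T"
proof -
  note W = assms(1)
  have LB: "LB_feasible W T \<tau> \<delta>" using assms(2) unfolding LB_optimal_def by blast
  note P = LB_policy[OF W LB]
  have opt: "\<forall>\<delta>'. ml_policy W T \<delta>' \<and> det_policy W T \<delta>' \<and> decomposable W T \<delta>' \<longrightarrow>
                pvalue W T \<delta>' \<le> pvalue W T (prod_policy W \<delta>)"
    using opt_part[OF W assms(2)] by blast
  have rel: "\<forall>\<tau>' \<delta>'. LB_feasible W T \<tau>' \<delta>' \<longrightarrow> IP_feasible W T \<tau>' \<delta>'"
    using LB_IP[OF W] by blast
  have "milp_obj W T \<tau> \<le> v_ml W T"
    unfolding v_ml_def
  proof (rule cSup_upper[OF _ vml_bdd[OF W]])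
    show "milp_obj W T \<tau> \<in> {pvalue W T \<delta>' | \<delta>'. ml_policy W T \<delta>'}"
      using LB_value[OF W LB] P(1) by force
  qed
  moreover have "milp_obj W T \<tau> \<le> z_IP W T"
    unfolding z_IP_def
  proof (rule cSup_upper[OF _ zIP_bdd[OF W]])
    show "milp_obj W T \<tau> \<in> {milp_obj W T \<tau>' | \<tau>' \<delta>'. IP_feasible W T \<tau>' \<delta>'}"
      using LB_IP[OF W LB] by blast
  qed
  ultimately show ?thesis using P opt rel by blast
qed

end
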